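(* Let $h_{uA}(u,r,x^C)$ and symmetric $\mathring\gamma$-traceless $h_{AB}(u,r,x^C)$ be smooth, set $\check h_{uA}=h_{uA}/r^2$, $\check h_{AB}=h_{AB}/r^2$, and $V(r)=\varepsilon r-\alpha^2r^3-2m$. Let $i\ge0$ and suppose that the $i$-th $u$-derivatives of the two equations $$\partial_r\big[r^4\partial_r\check h_{uA}\big]=\mathring D^B\big[r^2\partial_r\check h_{AB}\big],$$ $$0=\partial_r\Big[r\partial_u\check h_{AB}-\tfrac12V\partial_r\check h_{AB}-\tfrac{V}{2r}\check h_{AB}-r\,\mathrm{TS}[\mathring D_A\check h_{uB}]\Big]+\Big(\frac{m}{r^2}-\alpha^2r\Big)\check h_{AB}-\mathrm{TS}[\mathring D_A\check h_{uB}]$$ hold. Define $$Q^{[3,i+1]}_A:=\mathring D^B\Big[2r\partial_u^{i+1}\check h_{AB}-V\partial_r\partial_u^i\check h_{AB}-\frac1{r^2}\partial_r\big(r^4\,\mathrm{TS}[\mathring D_A\partial_u^i\check h_{uB}]\big)+(P-\varepsilon)\partial_u^i\check h_{AB}\Big]+\alpha^2r^4\partial_r\partial_u^i\check h_{uA}+2m\big(3\partial_u^i\check h_{uA}+r\partial_r\partial_u^i\check h_{uA}\big).$$ Then $\partial_rQ^{[3,i+1]}_A=0$.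
   Context: $\mathbf S$ is a compact orientable two-dimensional manifold with metric $\mathring\gamma$ of constant Gauss curvature $\varepsilon\in\{0,\pm1\}$, Levi-Civita connection $\mathring D$; indices are raised with $\mathring\gamma$. Here $m\in\mathbb R$, $\alpha\in\mathbb R\cup i\mathbb R$ are constants, $(u,r,x^A)$ coordinates with $x^A$ on $\mathbf S$. $\mathrm{TS}[X_{AB}]=\frac12(X_{AB}+X_{BA}-\mathring\gamma^{CD}X_{CD}\mathring\gamma_{AB})$ is the traceless symmetric part, and $P$ acts on symmetric traceless tensors by $Ph_{AB}=\mathrm{TS}[\mathring D_A\mathring D^Ch_{BC}]$. *)

theory Defs
  imports "HOL-Analysis.Analysis"
begin

text \<open>Local-coordinate model. Points of spacetime are (u, r, x) with x = (x1,x2) a coordinate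
  point of a chart X of the surface S. Tensor indices A,B,... range over {0,1} (i.e. A < 2).\<close>

type_synonym pt = "real \<times> real \<times> (real \<times> real)"

definition uc :: "pt \<Rightarrow> real" where "uc p = fst p"
definition rc :: "pt \<Rightarrow> real" where "rc p = fst (snd p)"
definition xc :: "pt \<Rightarrow> real \<times> real" where "xc p = snd (snd p)"

coinductive smooth_on :: "'a::real_normed_vector set \<Rightarrow> ('a \<Rightarrow> real) \<Rightarrow> bool" where
  "f differentiable_on U \<Longrightarrow> (\<forall>v. smooth_on U (\<lambda>p. frechet_derivative f (at p) v))
     \<Longrightarrow> smooth_on U f"

definition ebasis :: "nat \<Rightarrow> real \<times> real" where
  "ebasis A = (if A = 0 then (1, 0) else (0, 1))"

definition pdx :: "nat \<Rightarrow> (real \<times> real \<Rightarrow> real) \<Rightarrow> real \<times> real \<Rightarrow> real" where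
  "pdx A f x = deriv (\<lambda>t. f (x + t *\<^sub>R ebasis A)) 0"

definition du :: "(pt \<Rightarrow> real) \<Rightarrow> pt \<Rightarrow> real" where
  "du f p = deriv (\<lambda>t. f (t, rc p, xc p)) (uc p)"

definition dr :: "(pt \<Rightarrow> real) \<Rightarrow> pt \<Rightarrow> real" where
  "dr f p = deriv (\<lambda>t. f (uc p, t, xc p)) (rc p)"

definition dx :: "nat \<Rightarrow> (pt \<Rightarrow> real) \<Rightarrow> pt \<Rightarrow> real" where
  "dx A f p = deriv (\<lambda>t. f (uc p, rc p, xc p + t *\<^sub>R ebasis A)) 0"

type_synonym metric = "nat \<Rightarrow> nat \<Rightarrow> real \<times> real \<Rightarrow> real"

definition gdet :: "metric \<Rightarrow> real \<times> real \<Rightarrow> real" where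
  "gdet g x = g 0 0 x * g 1 1 x - g 0 1 x * g 1 0 x"

definition ginv :: "metric \<Rightarrow> metric" where
  "ginv g A B x =
     (if A = 0 \<and> B = 0 then g 1 1 x / gdet g x
      else if A = 1 \<and> B = 1 then g 0 0 x / gdet g x
      else if A = 0 \<and> B = 1 then - g 0 1 x / gdet g x
      else if A = 1 \<and> B = 0 then - g 1 0 x / gdet g x else 0)"

definition Gam :: "metric \<Rightarrow> nat \<Rightarrow> nat \<Rightarrow> nat \<Rightarrow> real \<times> real \<Rightarrow> real" where
  "Gam g C A B x = (1/2) * (\<Sum>D<2. ginv g C D x *
      (pdx A (g D B) x + pdx B (g D A) x - pdx D (g A B) x))"

text \<open>Riemann tensor R^P_{SMN} = d_M \<Gamma>^P_{NS} - d_N \<Gamma>^P_{MS} + \<Gamma>^P_{ML}\<Gamma>^L_{NS} - \<Gamma>^P_{NL}\<Gamma>^L_{MS},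
  so that R(d_M,d_N) d_S = R^P_{SMN} d_P.\<close>
definition Riem :: "metric \<Rightarrow> nat \<Rightarrow> nat \<Rightarrow> nat \<Rightarrow> nat \<Rightarrow> real \<times> real \<Rightarrow> real" where
  "Riem g P S M N x = pdx M (Gam g P N S) x - pdx N (Gam g P M S) x
     + (\<Sum>L<2. Gam g P M L x * Gam g L N S x - Gam g P N L x * Gam g L M S x)"

text \<open>Gauss curvature K = R_{0101} / det g = g(R(d_0,d_1)d_1, d_0)/det g.\<close>
definition gauss_curv :: "metric \<Rightarrow> real \<times> real \<Rightarrow> real" where
  "gauss_curv g x = (\<Sum>E<2. g 0 E x * Riem g E 1 0 1 x) / gdet g x"

definition cov1 :: "metric \<Rightarrow> nat \<Rightarrow> (nat \<Rightarrow> pt \<Rightarrow> real) \<Rightarrow> nat \<Rightarrow> pt \<Rightarrow> real" where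
  "cov1 g A w B p = dx A (w B) p - (\<Sum>C<2. Gam g C A B (xc p) * w C p)"

definition cov2 :: "metric \<Rightarrow> nat \<Rightarrow> (nat \<Rightarrow> nat \<Rightarrow> pt \<Rightarrow> real) \<Rightarrow> nat \<Rightarrow> nat \<Rightarrow> pt \<Rightarrow> real" where
  "cov2 g C T A B p = dx C (T A B) p
     - (\<Sum>D<2. Gam g D C A (xc p) * T D B p) - (\<Sum>D<2. Gam g D C B (xc p) * T A D p)"

definition divT :: "metric \<Rightarrow> (nat \<Rightarrow> nat \<Rightarrow> pt \<Rightarrow> real) \<Rightarrow> nat \<Rightarrow> pt \<Rightarrow> real" where
  "divT g T A p = (\<Sum>B<2. \<Sum>C<2. ginv g B C (xc p) * cov2 g C T A B p)"

definition TS :: "metric \<Rightarrow> (nat \<Rightarrow> nat \<Rightarrow> pt \<Rightarrow> real) \<Rightarrow> nat \<Rightarrow> nat \<Rightarrow> pt \<Rightarrow> real" where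
  "TS g X A B p = (1/2) * (X A B p + X B A p
     - (\<Sum>C<2. \<Sum>D<2. ginv g C D (xc p) * X C D p) * g A B (xc p))"

definition Pop :: "metric \<Rightarrow> (nat \<Rightarrow> nat \<Rightarrow> pt \<Rightarrow> real) \<Rightarrow> nat \<Rightarrow> nat \<Rightarrow> pt \<Rightarrow> real" where
  "Pop g T = TS g (\<lambda>A B. cov1 g A (divT g T) B)"

definition Vfun :: "real \<Rightarrow> real \<Rightarrow> real \<Rightarrow> real \<Rightarrow> real" where
  "Vfun eps a2 m r = eps * r - a2 * r ^ 3 - 2 * m"

end

theory Submission
  imports Defs
begin



definition dv :: "'a::real_normed_vector \<Rightarrow> ('a \<Rightarrow> real) \<Rightarrow> 'a \<Rightarrow> real" where
  "dv v f p = deriv (\<lambda>t. f (p + t *\<^sub>R v)) 0"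

lemma dv_hasd:
  assumes "(f has_derivative f') (at p)"
  shows "dv v f p = f' v"
proof -
  have bl: "bounded_linear f'" using assms by (rule has_derivative_bounded_linear)
  have l: "((\<lambda>t::real. p + t *\<^sub>R v) has_derivative (\<lambda>t. t *\<^sub>R v)) (at 0)"
    by (auto intro!: derivative_eq_intros)
  have f0: "(f has_derivative f') (at ((\<lambda>t::real. p + t *\<^sub>R v) 0))" using assms by simp
  have "((f \<circ> (\<lambda>t::real. p + t *\<^sub>R v)) has_derivative (f' \<circ> (\<lambda>t. t *\<^sub>R v))) (at 0)"
    by (rule diff_chain_at[OF l f0])
  moreover have "(f' \<circ> (\<lambda>t. t *\<^sub>R v)) = (*) (f' v)"
  proof
    fix t :: real
    show "(f' \<circ> (\<lambda>t. t *\<^sub>R v)) t = f' v * t"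
      using linear_simps(5)[OF bl, of t v] by (simp add: mult.commute)
  qed
  ultimately have "((\<lambda>t. f (p + t *\<^sub>R v)) has_real_derivative f' v) (at 0)"
    by (simp add: has_field_derivative_def o_def)
  then show ?thesis unfolding dv_def by (rule DERIV_imp_deriv)
qed

lemma dv_fd: "f differentiable (at p) \<Longrightarrow> dv v f p = frechet_derivative f (at p) v"
  by (rule dv_hasd) (simp add: frechet_derivative_works[symmetric])

inductive gen :: "'a::real_normed_vector set \<Rightarrow> ('a \<Rightarrow> real) \<Rightarrow> bool" for U where
  gbase: "smooth_on U f \<Longrightarrow> gen U f"
| gconst: "gen U (\<lambda>x. c)"
| gadd: "gen U f \<Longrightarrow> gen U g \<Longrightarrow> gen U (\<lambda>x. f x + g x)"
| gmult: "gen U f \<Longrightarrow> gen U g \<Longrightarrow> gen U (\<lambda>x. f x * g x)"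
| ginv: "smooth_on U f \<Longrightarrow> (\<forall>x\<in>U. f x \<noteq> 0) \<Longrightarrow> gen U (\<lambda>x. inverse (f x))"
| gcong: "gen U f \<Longrightarrow> (\<forall>x\<in>U. f x = g x) \<Longrightarrow> gen U g"
| glin: "bounded_linear f \<Longrightarrow> gen U f"

lemma smooth_don: "smooth_on U f \<Longrightarrow> f differentiable_on U"
  by (subst (asm) smooth_on.simps) blast

lemma smooth_deriv: "smooth_on U f \<Longrightarrow> smooth_on U (\<lambda>p. frechet_derivative f (at p) v)"
  by (subst (asm) smooth_on.simps) blast

lemma smooth_diffble: "smooth_on U f \<Longrightarrow> open U \<Longrightarrow> x \<in> U \<Longrightarrow> f differentiable (at x)"
proof -
  assume a: "smooth_on U f" "open U" "x \<in> U"
  from a(1) have "f differentiable_on U" by (rule smooth_don)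
  then have "f differentiable (at x within U)" using a(3) by (simp add: differentiable_on_def)
  then show ?thesis using at_within_open[OF a(3) a(2)] by simp
qed

lemma gen_props:
  assumes "open U" "gen U f"
  shows "(\<forall>x\<in>U. f differentiable (at x)) \<and> (\<forall>v. gen U (\<lambda>p. frechet_derivative f (at p) v))"
  using assms(2)
proof induction
  case (gbase f)
  have "\<forall>x\<in>U. f differentiable (at x)" using smooth_diffble[OF gbase assms(1)] by blast
  moreover have "\<forall>v. gen U (\<lambda>p. frechet_derivative f (at p) v)"
  proof
    fix v show "gen U (\<lambda>p. frechet_derivative f (at p) v)" by (rule gen.gbase[OF smooth_deriv[OF gbase]])
  qed
  ultimately show ?case by (rule conjI)
next
  case (gconst c)
  then show ?case by (simp add: gen.gconst)
next
  case (gadd f g)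
  from gadd have df: "\<forall>x\<in>U. f differentiable (at x)" and dg: "\<forall>x\<in>U. g differentiable (at x)"
    and gf: "\<forall>v. gen U (\<lambda>p. frechet_derivative f (at p) v)" and gg: "\<forall>v. gen U (\<lambda>p. frechet_derivative g (at p) v)"
    by blast+
  have "gen U (\<lambda>p. frechet_derivative (\<lambda>x. f x + g x) (at p) v)" for v
  proof (rule gcong)
    show "gen U (\<lambda>p. frechet_derivative f (at p) v + frechet_derivative g (at p) v)"
      using gf gg by (intro gen.gadd) auto
    show "\<forall>x\<in>U. frechet_derivative f (at x) v + frechet_derivative g (at x) v =
       frechet_derivative (\<lambda>x. f x + g x) (at x) v"
    proof
      fix x assume x: "x \<in> U"
      have "((\<lambda>x. f x + g x) has_derivative (\<lambda>h. frechet_derivative f (at x) h + frechet_derivative g (at x) h)) (at x)"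
        using df dg x by (intro has_derivative_add; simp add: frechet_derivative_works[symmetric])
      then have "frechet_derivative (\<lambda>x. f x + g x) (at x) = (\<lambda>h. frechet_derivative f (at x) h + frechet_derivative g (at x) h)"
        by (rule frechet_derivative_at[symmetric])
      then show "frechet_derivative f (at x) v + frechet_derivative g (at x) v =
       frechet_derivative (\<lambda>x. f x + g x) (at x) v" by simp
    qed
  qed
  moreover have "\<forall>x\<in>U. (\<lambda>x. f x + g x) differentiable (at x)"
    using df dg by (simp add: differentiable_add)
  ultimately show ?case by blast
next
  case (gmult f g)
  from gmult have df: "\<forall>x\<in>U. f differentiable (at x)" and dg: "\<forall>x\<in>U. g differentiable (at x)"
    and gf: "\<forall>v. gen U (\<lambda>p. frechet_derivative f (at p) v)" and gg: "\<forall>v. gen U (\<lambda>p. frechet_derivative g (at p) v)"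
    by blast+
  have "gen U (\<lambda>p. frechet_derivative (\<lambda>x. f x * g x) (at p) v)" for v
  proof (rule gcong)
    show "gen U (\<lambda>p. f p * frechet_derivative g (at p) v + frechet_derivative f (at p) v * g p)"
      by (intro gen.gadd gen.gmult) (use gmult gf gg in auto)
    show "\<forall>x\<in>U. f x * frechet_derivative g (at x) v + frechet_derivative f (at x) v * g x =
       frechet_derivative (\<lambda>x. f x * g x) (at x) v"
    proof
      fix x assume x: "x \<in> U"
      have "((\<lambda>x. f x * g x) has_derivative (\<lambda>h. f x * frechet_derivative g (at x) h + frechet_derivative f (at x) h * g x)) (at x)"
        using df dg x by (intro has_derivative_mult; simp add: frechet_derivative_works[symmetric])
      then have "frechet_derivative (\<lambda>x. f x * g x) (at x) = (\<lambda>h. f x * frechet_derivative g (at x) h + frechet_derivative f (at x) h * g x)"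
        by (rule frechet_derivative_at[symmetric])
      then show "f x * frechet_derivative g (at x) v + frechet_derivative f (at x) v * g x =
       frechet_derivative (\<lambda>x. f x * g x) (at x) v" by simp
    qed
  qed
  moreover have "\<forall>x\<in>U. (\<lambda>x. f x * g x) differentiable (at x)"
    using df dg by (simp add: differentiable_mult)
  ultimately show ?case by blast
next
  case (ginv f)
  have df: "\<forall>x\<in>U. f differentiable (at x)" using smooth_diffble[OF ginv(1) assms(1)] by blast
  have "gen U (\<lambda>p. frechet_derivative (\<lambda>x. inverse (f x)) (at p) v)" for v
  proof (rule gcong)
    show "gen U (\<lambda>p. (- 1) * (inverse (f p) * frechet_derivative f (at p) v * inverse (f p)))"
      by (intro gen.gmult gen.ginv gen.gconst gen.gbase smooth_deriv) (use ginv in auto)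
    show "\<forall>x\<in>U. (- 1) * (inverse (f x) * frechet_derivative f (at x) v * inverse (f x)) =
       frechet_derivative (\<lambda>x. inverse (f x)) (at x) v"
    proof
      fix x assume x: "x \<in> U"
      have "((\<lambda>x. inverse (f x)) has_derivative (\<lambda>h. - (inverse (f x) * frechet_derivative f (at x) h * inverse (f x)))) (at x)"
        using ginv(2) df x by (intro Deriv.has_derivative_inverse; simp add: frechet_derivative_works[symmetric])
      then have "frechet_derivative (\<lambda>x. inverse (f x)) (at x) = (\<lambda>h. - (inverse (f x) * frechet_derivative f (at x) h * inverse (f x)))"
        by (rule frechet_derivative_at[symmetric])
      then show "(- 1) * (inverse (f x) * frechet_derivative f (at x) v * inverse (f x)) =
       frechet_derivative (\<lambda>x. inverse (f x)) (at x) v" by simp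
    qed
  qed
  moreover have "\<forall>x\<in>U. (\<lambda>x. inverse (f x)) differentiable (at x)"
  proof
    fix x assume x: "x \<in> U"
    then obtain D where "(f has_derivative D) (at x)" using df unfolding differentiable_def by blast
    from Deriv.has_derivative_inverse[OF _ this] x ginv(2) show "(\<lambda>x. inverse (f x)) differentiable (at x)"
      unfolding differentiable_def by blast
  qed
  ultimately show ?case by blast
next
  case (gcong f g)
  from gcong have eq: "\<forall>x\<in>U. f x = g x" and df: "\<forall>x\<in>U. f differentiable (at x)"
    and gf: "\<forall>v. gen U (\<lambda>p. frechet_derivative f (at p) v)" by blast+
  have dg: "\<forall>x\<in>U. g differentiable (at x)"
  proof
    fix x assume x: "x \<in> U"
    then obtain D where "(f has_derivative D) (at x)" using df unfolding differentiable_def by blast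
    from has_derivative_transform_within_open[OF this assms(1) x, of g] eq
    show "g differentiable (at x)" unfolding differentiable_def by blast
  qed
  have "gen U (\<lambda>p. frechet_derivative g (at p) v)" for v
  proof (rule gen.gcong[where f="\<lambda>p. frechet_derivative f (at p) v"])
    show "gen U (\<lambda>p. frechet_derivative f (at p) v)" using gf by blast
    show "\<forall>x\<in>U. frechet_derivative f (at x) v = frechet_derivative g (at x) v"
    proof
      fix x assume x: "x \<in> U"
      have "f differentiable (at x)" using df x by blast
      have "frechet_derivative f (at x) = frechet_derivative g (at x)"
        by (rule frechet_derivative_transform_within_open[OF \<open>f differentiable (at x)\<close> assms(1) x]) (use eq in blast)
      then show "frechet_derivative f (at x) v = frechet_derivative g (at x) v" by simp
    qed
  qed
  then show ?case using dg by blast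
next
  case (glin f)
  have fd: "frechet_derivative f (at p) = f" for p
    by (rule frechet_derivative_at[OF bounded_linear_imp_has_derivative[OF glin], symmetric])
  have g1: "\<forall>v. gen U (\<lambda>p. frechet_derivative f (at p) v)" by (simp add: fd gen.gconst)
  have g2: "\<forall>x\<in>U. f differentiable (at x)" using glin bounded_linear_imp_differentiable by blast
  from g2 g1 show ?case by (rule conjI)
qed

lemma gen_smooth: assumes "open U" "gen U f" shows "smooth_on U f"
  using assms(2)
proof (coinduction arbitrary: f)
  case (smooth_on f)
  have a: "\<forall>x\<in>U. f differentiable (at x)" and d: "\<forall>v. gen U (\<lambda>p. frechet_derivative f (at p) v)"
    using gen_props[OF assms(1) smooth_on] by blast+
  from a have "f differentiable_on U" by (simp add: differentiable_at_imp_differentiable_on)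
  then show ?case using d by blast
qed


lemma sm_const: "open U \<Longrightarrow> smooth_on U (\<lambda>x. c)"
  by (rule gen_smooth) (auto intro: gen.intros)

lemma sm_lin: "open U \<Longrightarrow> bounded_linear L \<Longrightarrow> smooth_on U L"
  by (rule gen_smooth) (auto intro: gen.intros)

lemma sm_add: "open U \<Longrightarrow> smooth_on U f \<Longrightarrow> smooth_on U g \<Longrightarrow> smooth_on U (\<lambda>x. f x + g x)"
  by (rule gen_smooth) (auto intro: gen.intros)

lemma sm_mult: "open U \<Longrightarrow> smooth_on U f \<Longrightarrow> smooth_on U g \<Longrightarrow> smooth_on U (\<lambda>x. f x * g x)"
  by (rule gen_smooth) (auto intro: gen.intros)

lemma sm_inverse: "open U \<Longrightarrow> smooth_on U f \<Longrightarrow> (\<forall>x\<in>U. f x \<noteq> 0) \<Longrightarrow> smooth_on U (\<lambda>x. inverse (f x))"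
  by (rule gen_smooth) (auto intro: gen.intros)

lemma sm_cong: "open U \<Longrightarrow> smooth_on U f \<Longrightarrow> (\<forall>x\<in>U. f x = g x) \<Longrightarrow> smooth_on U g"
  by (rule gen_smooth) (auto intro: gen.intros)

lemma sm_minus: "open U \<Longrightarrow> smooth_on U f \<Longrightarrow> smooth_on U (\<lambda>x. - f x)"
proof -
  assume a: "open U" "smooth_on U f"
  have "smooth_on U (\<lambda>x. (-1) * f x)" by (rule sm_mult[OF a(1) sm_const[OF a(1)] a(2)])
  then show ?thesis by simp
qed

lemma sm_diff: "open U \<Longrightarrow> smooth_on U f \<Longrightarrow> smooth_on U g \<Longrightarrow> smooth_on U (\<lambda>x. f x - g x)"
proof -
  assume a: "open U" "smooth_on U f" "smooth_on U g"
  have "smooth_on U (\<lambda>x. f x + - g x)" by (rule sm_add[OF a(1) a(2) sm_minus[OF a(1) a(3)]])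
  then show ?thesis by simp
qed

lemma sm_divide: "open U \<Longrightarrow> smooth_on U f \<Longrightarrow> smooth_on U g \<Longrightarrow> (\<forall>x\<in>U. g x \<noteq> 0) \<Longrightarrow> smooth_on U (\<lambda>x. f x / g x)"
proof -
  assume a: "open U" "smooth_on U f" "smooth_on U g" "\<forall>x\<in>U. g x \<noteq> 0"
  have "smooth_on U (\<lambda>x. f x * inverse (g x))" by (rule sm_mult[OF a(1) a(2) sm_inverse[OF a(1) a(3) a(4)]])
  then show ?thesis by (simp add: divide_inverse)
qed

lemma sm_power: "open U \<Longrightarrow> smooth_on U f \<Longrightarrow> smooth_on U (\<lambda>x. f x ^ n)"
proof (induction n)
  case 0
  then show ?case by (simp add: sm_const)
next
  case (Suc n)
  then show ?case using sm_mult[of U f "\<lambda>x. f x ^ n"] by simp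
qed

lemma sm_sum:
  assumes U: "open U" and "finite I" "\<And>i. i \<in> I \<Longrightarrow> smooth_on U (f i)"
  shows "smooth_on U (\<lambda>x. \<Sum>i\<in>I. f i x)"
  using assms(2,3)
proof (induction I rule: finite_induct)
  case empty
  then show ?case by (simp add: sm_const[OF U])
next
  case (insert a I)
  have "smooth_on U (\<lambda>x. f a x + (\<Sum>i\<in>I. f i x))"
    using insert by (intro sm_add[OF U]) auto
  then show ?case using insert by simp
qed

lemma sm_comp_lin:
  assumes U: "open U" and X: "open X" and L: "bounded_linear L" and LU: "\<forall>x\<in>U. L x \<in> X"
    and phi: "smooth_on X \<phi>"
  shows "smooth_on U (\<lambda>x. \<phi> (L x))"
proof -
  have "U' = U \<and> (\<exists>\<phi>. smooth_on X \<phi> \<and> (\<forall>x\<in>U. F x = \<phi> (L x))) \<Longrightarrow> smooth_on U' F" for U' F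
  proof (coinduction arbitrary: U' F rule: smooth_on.coinduct)
    case (smooth_on U' F)
    then obtain \<phi> where U': "U' = U" and \<phi>: "smooth_on X \<phi>" and eq: "\<forall>x\<in>U. F x = \<phi> (L x)" by blast
    have hd: "(F has_derivative (\<lambda>h. frechet_derivative \<phi> (at (L x)) (L h))) (at x)" if x: "x \<in> U" for x
    proof -
      have "(\<phi> has_derivative frechet_derivative \<phi> (at (L x))) (at (L x))"
        using smooth_diffble[OF \<phi> X] x LU frechet_derivative_works by blast
      then have "((\<lambda>x. \<phi> (L x)) has_derivative (\<lambda>h. frechet_derivative \<phi> (at (L x)) (L h))) (at x)"
        using diff_chain_at[OF bounded_linear_imp_has_derivative[OF L]] by (simp add: o_def)
      then show ?thesis
        by (rule has_derivative_transform_within_open[OF _ U x]) (use eq in auto)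
    qed
    have D1: "F differentiable_on U"
      using hd by (intro differentiable_at_imp_differentiable_on) (auto simp: differentiable_def)
    have D2: "\<forall>x\<in>U. frechet_derivative F (at x) v = frechet_derivative \<phi> (at (L x)) (L v)" for v
    proof
      fix x assume x: "x \<in> U"
      have "frechet_derivative F (at x) = (\<lambda>h. frechet_derivative \<phi> (at (L x)) (L h))"
        by (rule frechet_derivative_at[OF hd[OF x], symmetric])
      then show "frechet_derivative F (at x) v = frechet_derivative \<phi> (at (L x)) (L v)" by simp
    qed
    have D3: "smooth_on X (\<lambda>y. frechet_derivative \<phi> (at y) (L v))" for v
      by (rule smooth_deriv[OF \<phi>])
    have D: "\<forall>v. \<exists>\<phi>'. smooth_on X \<phi>' \<and> (\<forall>x\<in>U. frechet_derivative F (at x) v = \<phi>' (L x))"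
    proof
      fix v show "\<exists>\<phi>'. smooth_on X \<phi>' \<and> (\<forall>x\<in>U. frechet_derivative F (at x) v = \<phi>' (L x))"
        by (intro exI[of _ "\<lambda>y. frechet_derivative \<phi> (at y) (L v)"] conjI D3 D2)
    qed
    show ?case
    proof (rule exI[of _ F], rule exI[of _ U'], intro conjI refl allI disjI1)
      show "F differentiable_on U'" using D1 U' by simp
    next
      fix v
      obtain \<phi>' where p1: "smooth_on X \<phi>'" and p2: "\<forall>x\<in>U. frechet_derivative F (at x) v = \<phi>' (L x)"
        using D by blast
      show "\<exists>U'' F'. U' = U'' \<and> (\<lambda>p. frechet_derivative F (at p) v) = F' \<and> U'' = U \<and>
              (\<exists>\<phi>. smooth_on X \<phi> \<and> (\<forall>x\<in>U. F' x = \<phi> (L x)))"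
        by (intro exI[of _ U'] exI[of _ "\<lambda>p. frechet_derivative F (at p) v"] exI[of _ \<phi>'] conjI refl p1 U' p2)
    qed
  qed
  note H = this
  show ?thesis
  proof (rule H, intro conjI refl exI[of _ \<phi>])
    show "smooth_on X \<phi>" by (rule phi)
    show "\<forall>x\<in>U. \<phi> (L x) = \<phi> (L x)" by simp
  qed
qed

section \<open>Directional derivatives\<close>

lemma sm_hasd: "open U \<Longrightarrow> smooth_on U f \<Longrightarrow> x \<in> U \<Longrightarrow> (f has_derivative (\<lambda>h. dv h f x)) (at x)"
proof -
  assume a: "open U" "smooth_on U f" "x \<in> U"
  have d: "f differentiable (at x)" by (rule smooth_diffble[OF a(2) a(1) a(3)])
  then have "(\<lambda>h. dv h f x) = frechet_derivative f (at x)" by (simp add: dv_fd)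
  then show ?thesis using d frechet_derivative_works by metis
qed

lemma sm_dv: "open U \<Longrightarrow> smooth_on U f \<Longrightarrow> smooth_on U (dv v f)"
proof -
  assume a: "open U" "smooth_on U f"
  show ?thesis
    by (rule sm_cong[OF a(1) smooth_deriv[OF a(2), of v]]) (use a smooth_diffble dv_fd in metis)
qed

lemma dv_cong:
  assumes U: "open U" "x \<in> U" and eq: "\<forall>y\<in>U. f y = g y"
  shows "dv v f x = dv v g x"
proof -
  obtain e where e: "e > 0" "ball x e \<subseteq> U" using U open_contains_ball by blast
  have "eventually (\<lambda>t. f (x + t *\<^sub>R v) = g (x + t *\<^sub>R v)) (nhds (0::real))"
    unfolding eventually_nhds_metric
  proof (intro exI conjI allI impI)
    have nv: "norm v + 1 > 0" by (smt (verit) norm_ge_zero)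
    show "e / (norm v + 1) > 0" by (rule divide_pos_pos[OF e(1) nv])
    fix t :: real assume t: "dist t 0 < e / (norm v + 1)"
    have "norm (t *\<^sub>R v) = \<bar>t\<bar> * norm v" by simp
    also have "\<dots> \<le> \<bar>t\<bar> * (norm v + 1)" by (simp add: mult_left_mono)
    also have "\<dots> < e" using t nv by (simp add: pos_less_divide_eq)
    finally have "x + t *\<^sub>R v \<in> ball x e" by (simp add: dist_norm)
    then show "f (x + t *\<^sub>R v) = g (x + t *\<^sub>R v)" using e eq by blast
  qed
  then show ?thesis unfolding dv_def by (rule deriv_cong_ev) simp
qed

lemma dv_const: "dv v (\<lambda>x. c) p = 0"
  unfolding dv_def by simp

lemma dv_add: "open U \<Longrightarrow> smooth_on U f \<Longrightarrow> smooth_on U g \<Longrightarrow> x \<in> U \<Longrightarrow>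
  dv v (\<lambda>x. f x + g x) x = dv v f x + dv v g x"
  by (rule dv_hasd) (intro has_derivative_add sm_hasd; assumption)

lemma dv_diff: "open U \<Longrightarrow> smooth_on U f \<Longrightarrow> smooth_on U g \<Longrightarrow> x \<in> U \<Longrightarrow>
  dv v (\<lambda>x. f x - g x) x = dv v f x - dv v g x"
  by (rule dv_hasd) (intro has_derivative_diff sm_hasd; assumption)

lemma dv_minus: "open U \<Longrightarrow> smooth_on U f \<Longrightarrow> x \<in> U \<Longrightarrow>
  dv v (\<lambda>x. - f x) x = - dv v f x"
  by (rule dv_hasd) (intro has_derivative_minus sm_hasd; assumption)

lemma dv_mult: "open U \<Longrightarrow> smooth_on U f \<Longrightarrow> smooth_on U g \<Longrightarrow> x \<in> U \<Longrightarrow>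
  dv v (\<lambda>x. f x * g x) x = f x * dv v g x + dv v f x * g x"
  by (rule dv_hasd) (intro has_derivative_mult sm_hasd; assumption)

lemma dv_divide: "open U \<Longrightarrow> smooth_on U f \<Longrightarrow> smooth_on U g \<Longrightarrow> x \<in> U \<Longrightarrow> g x \<noteq> 0 \<Longrightarrow>
  dv v (\<lambda>x. f x / g x) x = - f x * (inverse (g x) * dv v g x * inverse (g x)) + dv v f x / g x"
  by (rule dv_hasd) (intro has_derivative_divide sm_hasd; assumption)

lemma dv_power: "open U \<Longrightarrow> smooth_on U f \<Longrightarrow> x \<in> U \<Longrightarrow>
  dv v (\<lambda>x. f x ^ n) x = of_nat n * dv v f x * f x ^ (n - 1)"
  by (rule dv_hasd) (intro has_derivative_power sm_hasd; assumption)

lemma dv_sum: "open U \<Longrightarrow> finite I \<Longrightarrow> (\<And>i. i \<in> I \<Longrightarrow> smooth_on U (f i)) \<Longrightarrow> x \<in> U \<Longrightarrow>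
  dv v (\<lambda>x. \<Sum>i\<in>I. f i x) x = (\<Sum>i\<in>I. dv v (f i) x)"
  by (rule dv_hasd) (intro has_derivative_sum sm_hasd; assumption)

lemma dv_lin: "bounded_linear L \<Longrightarrow> dv v L x = L v"
  by (rule dv_hasd) (rule bounded_linear_imp_has_derivative)


section \<open>Symmetry of second derivatives\<close>

lemma line_deriv:
  assumes "(f has_derivative f') (at (a + s *\<^sub>R v))"
  shows "((\<lambda>s. f (a + s *\<^sub>R v)) has_real_derivative f' v) (at s)"
proof -
  have bl: "bounded_linear f'" using assms by (rule has_derivative_bounded_linear)
  have l: "((\<lambda>t::real. a + t *\<^sub>R v) has_derivative (\<lambda>t. t *\<^sub>R v)) (at s)"
    by (auto intro!: derivative_eq_intros)
  have "((f \<circ> (\<lambda>t::real. a + t *\<^sub>R v)) has_derivative (f' \<circ> (\<lambda>t. t *\<^sub>R v))) (at s)"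
    by (rule diff_chain_at[OF l]) (use assms in simp)
  moreover have "(f' \<circ> (\<lambda>t. t *\<^sub>R v)) = (*) (f' v)"
  proof
    fix t :: real
    show "(f' \<circ> (\<lambda>t. t *\<^sub>R v)) t = f' v * t"
      using linear_simps(5)[OF bl, of t v] by (simp add: mult.commute)
  qed
  ultimately show ?thesis by (simp add: has_field_derivative_def o_def)
qed

lemma young:
  fixes f :: "'a::real_normed_vector \<Rightarrow> real"
  assumes U: "open U" "p \<in> U"
    and fd: "\<And>q. q \<in> U \<Longrightarrow> (f has_derivative f' q) (at q)"
    and dA: "((\<lambda>q. f' q v) has_derivative A) (at p)"
    and dB: "((\<lambda>q. f' q w) has_derivative B) (at p)"
  shows "A w = B v"
proof -
  define C where "C = norm v + norm w + 1"
  have C: "C > 0" unfolding C_def by (smt (verit) norm_ge_zero)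
  have lA: "linear A" using dA by (rule has_derivative_linear)
  have lB: "linear B" using dB by (rule has_derivative_linear)
  have key: "\<bar>A w - B v\<bar> \<le> 4 * e * C" if e: "e > 0" for e
  proof -
    obtain d0 where d0: "d0 > 0" "ball p d0 \<subseteq> U" using U open_contains_ball by blast
    obtain d1 where d1: "d1 > 0" "\<And>y. norm (y - p) < d1 \<Longrightarrow> norm (f' y v - f' p v - A (y - p)) \<le> e * norm (y - p)"
      using dA[unfolded has_derivative_at_alt] e by blast
    obtain d2 where d2: "d2 > 0" "\<And>y. norm (y - p) < d2 \<Longrightarrow> norm (f' y w - f' p w - B (y - p)) \<le> e * norm (y - p)"
      using dB[unfolded has_derivative_at_alt] e by blast
    define d where "d = min d0 (min d1 d2)"
    have d: "d > 0" "d \<le> d0" "d \<le> d1" "d \<le> d2" using d0 d1 d2 by (auto simp: d_def)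
    define h where "h = d / (2 * C)"
    have h: "h > 0" unfolding h_def using d C by simp
    have hC: "h * C < d" unfolding h_def using d C by (simp add: field_simps)
    have nrm: "norm (s *\<^sub>R v + t *\<^sub>R w) \<le> h * C" if "0 \<le> s" "s \<le> h" "0 \<le> t" "t \<le> h" for s t
    proof -
      have "norm (s *\<^sub>R v + t *\<^sub>R w) \<le> norm (s *\<^sub>R v) + norm (t *\<^sub>R w)" by (rule norm_triangle_ineq)
      also have "\<dots> = s * norm v + t * norm w" using that by simp
      also have "\<dots> \<le> h * norm v + h * norm w" using that by (intro add_mono mult_right_mono) auto
      also have "\<dots> \<le> h * C" unfolding C_def using h by (simp add: field_simps)
      finally show ?thesis .
    qed
    have inU: "p + (s *\<^sub>R v + t *\<^sub>R w) \<in> U" if "0 \<le> s" "s \<le> h" "0 \<le> t" "t \<le> h" for s t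
    proof -
      have "norm (s *\<^sub>R v + t *\<^sub>R w) < d0" using nrm[OF that] hC d by linarith
      then have "p + (s *\<^sub>R v + t *\<^sub>R w) \<in> ball p d0"
        using norm_minus_cancel[of "s *\<^sub>R v + t *\<^sub>R w"] by (simp add: dist_norm)
      then show ?thesis using d0 by blast
    qed
    define \<Delta> where "\<Delta> = f (p + (h *\<^sub>R v + h *\<^sub>R w)) - f (p + (h *\<^sub>R v + 0 *\<^sub>R w)) - f (p + (0 *\<^sub>R v + h *\<^sub>R w)) + f p"
    have E1: "\<bar>\<Delta> - h * h * A w\<bar> \<le> 2 * e * h * h * C"
    proof -
      define \<phi> where "\<phi> s = f ((p + h *\<^sub>R w) + s *\<^sub>R v) - f (p + s *\<^sub>R v)" for s
      have der: "(\<phi> has_real_derivative (f' ((p + h *\<^sub>R w) + s *\<^sub>R v) v - f' (p + s *\<^sub>R v) v)) (at s)"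
        if "0 \<le> s" "s \<le> h" for s
      proof -
        have a1: "(p + h *\<^sub>R w) + s *\<^sub>R v \<in> U" using inU[OF that, of h] h by (simp add: algebra_simps)
        have a2: "p + s *\<^sub>R v \<in> U" using inU[OF that, of 0] h by simp
        show ?thesis unfolding \<phi>_def
          by (intro DERIV_diff line_deriv fd a1 a2)
      qed
      obtain \<xi> where xi: "0 < \<xi>" "\<xi> < h"
        and mv: "\<phi> h - \<phi> 0 = (h - 0) * (f' ((p + h *\<^sub>R w) + \<xi> *\<^sub>R v) v - f' (p + \<xi> *\<^sub>R v) v)"
        using MVT2[OF h der] by blast
      have "\<phi> h - \<phi> 0 = \<Delta>" unfolding \<phi>_def \<Delta>_def by (simp add: algebra_simps)
      define y1 where "y1 = (p + h *\<^sub>R w) + \<xi> *\<^sub>R v"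
      define y2 where "y2 = p + \<xi> *\<^sub>R v"
      have n1: "norm (y1 - p) \<le> h * C" unfolding y1_def using nrm[of \<xi> h] xi h by (simp add: algebra_simps)
      have n2: "norm (y2 - p) \<le> h * C" unfolding y2_def using nrm[of \<xi> 0] xi h by simp
      have b1: "norm (f' y1 v - f' p v - A (y1 - p)) \<le> e * (h * C)"
        using d1(2)[of y1] n1 hC d e by (smt (verit) mult_left_mono)
      have b2: "norm (f' y2 v - f' p v - A (y2 - p)) \<le> e * (h * C)"
        using d1(2)[of y2] n2 hC d e by (smt (verit) mult_left_mono)
      have lin: "A (y1 - p) - A (y2 - p) = h * A w"
        unfolding y1_def y2_def using lA by (simp add: linear_simps(5)[symmetric] linear_add linear_scale algebra_simps)
      have "\<bar>(f' y1 v - f' y2 v) - h * A w\<bar> \<le> 2 * e * (h * C)"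
        using b1 b2 lin by (simp add: real_norm_def)
      moreover have "\<Delta> = h * (f' y1 v - f' y2 v)" using mv \<open>\<phi> h - \<phi> 0 = \<Delta>\<close> unfolding y1_def y2_def by simp
      ultimately have "\<Delta> - h * h * A w = h * ((f' y1 v - f' y2 v) - h * A w)"
        by (simp add: algebra_simps)
      then have "\<bar>\<Delta> - h * h * A w\<bar> = h * \<bar>(f' y1 v - f' y2 v) - h * A w\<bar>"
        using h by (simp add: abs_mult)
      also have "\<dots> \<le> h * (2 * e * (h * C))" using \<open>\<bar>(f' y1 v - f' y2 v) - h * A w\<bar> \<le> 2 * e * (h * C)\<close> h
        by (simp add: mult_left_mono)
      finally show ?thesis by (simp add: algebra_simps)
    qed
    have E2: "\<bar>\<Delta> - h * h * B v\<bar> \<le> 2 * e * h * h * C"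
    proof -
      define \<phi> where "\<phi> s = f ((p + h *\<^sub>R v) + s *\<^sub>R w) - f (p + s *\<^sub>R w)" for s
      have der: "(\<phi> has_real_derivative (f' ((p + h *\<^sub>R v) + s *\<^sub>R w) w - f' (p + s *\<^sub>R w) w)) (at s)"
        if "0 \<le> s" "s \<le> h" for s
      proof -
        have a1: "(p + h *\<^sub>R v) + s *\<^sub>R w \<in> U" using inU[of h s] h that by (simp add: algebra_simps)
        have a2: "p + s *\<^sub>R w \<in> U" using inU[of 0 s] h that by simp
        show ?thesis unfolding \<phi>_def
          by (intro DERIV_diff line_deriv fd a1 a2)
      qed
      obtain \<xi> where xi: "0 < \<xi>" "\<xi> < h"
        and mv: "\<phi> h - \<phi> 0 = (h - 0) * (f' ((p + h *\<^sub>R v) + \<xi> *\<^sub>R w) w - f' (p + \<xi> *\<^sub>R w) w)"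
        using MVT2[OF h der] by blast
      have "\<phi> h - \<phi> 0 = \<Delta>" unfolding \<phi>_def \<Delta>_def by (simp add: algebra_simps)
      define y1 where "y1 = (p + h *\<^sub>R v) + \<xi> *\<^sub>R w"
      define y2 where "y2 = p + \<xi> *\<^sub>R w"
      have n1: "norm (y1 - p) \<le> h * C" unfolding y1_def using nrm[of h \<xi>] xi h by (simp add: algebra_simps)
      have n2: "norm (y2 - p) \<le> h * C" unfolding y2_def using nrm[of 0 \<xi>] xi h by simp
      have b1: "norm (f' y1 w - f' p w - B (y1 - p)) \<le> e * (h * C)"
        using d2(2)[of y1] n1 hC d e by (smt (verit) mult_left_mono)
      have b2: "norm (f' y2 w - f' p w - B (y2 - p)) \<le> e * (h * C)"
        using d2(2)[of y2] n2 hC d e by (smt (verit) mult_left_mono)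
      have lin: "B (y1 - p) - B (y2 - p) = h * B v"
        unfolding y1_def y2_def using lB by (simp add: linear_simps(5)[symmetric] linear_add linear_scale algebra_simps)
      have "\<bar>(f' y1 w - f' y2 w) - h * B v\<bar> \<le> 2 * e * (h * C)"
        using b1 b2 lin by (simp add: real_norm_def)
      moreover have "\<Delta> = h * (f' y1 w - f' y2 w)" using mv \<open>\<phi> h - \<phi> 0 = \<Delta>\<close> unfolding y1_def y2_def by simp
      ultimately have "\<Delta> - h * h * B v = h * ((f' y1 w - f' y2 w) - h * B v)"
        by (simp add: algebra_simps)
      then have "\<bar>\<Delta> - h * h * B v\<bar> = h * \<bar>(f' y1 w - f' y2 w) - h * B v\<bar>"
        using h by (simp add: abs_mult)
      also have "\<dots> \<le> h * (2 * e * (h * C))" using \<open>\<bar>(f' y1 w - f' y2 w) - h * B v\<bar> \<le> 2 * e * (h * C)\<close> h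
        by (simp add: mult_left_mono)
      finally show ?thesis by (simp add: algebra_simps)
    qed
    have "(\<Delta> - h * h * B v) - (\<Delta> - h * h * A w) = (h * h) * (A w - B v)" by (simp add: algebra_simps)
    then have "h * h * \<bar>A w - B v\<bar> = \<bar>(\<Delta> - h * h * B v) - (\<Delta> - h * h * A w)\<bar>"
      using h by (simp add: abs_mult)
    also have "\<dots> \<le> \<bar>\<Delta> - h * h * B v\<bar> + \<bar>\<Delta> - h * h * A w\<bar>" by (rule abs_triangle_ineq4)
    also have "\<dots> \<le> h * h * (4 * e * C)" using E1 E2 by (simp add: algebra_simps)
    finally show ?thesis using h by (simp add: mult_le_cancel_left_pos)
  qed
  show ?thesis
  proof (rule ccontr)
    assume ne: "A w \<noteq> B v"
    define e where "e = \<bar>A w - B v\<bar> / (8 * C)"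
    have e: "e > 0" unfolding e_def using ne C by simp
    have "\<bar>A w - B v\<bar> \<le> 4 * e * C" by (rule key[OF e])
    also have "\<dots> = \<bar>A w - B v\<bar> / 2" unfolding e_def using C by simp
    finally show False using ne by simp
  qed
qed

lemma dv_swap:
  assumes U: "open U" and f: "smooth_on U f" and p: "p \<in> U"
  shows "dv v (dv w f) p = dv w (dv v f) p"
proof -
  define G where "G = (\<lambda>q. frechet_derivative f (at q) v)"
  define H where "H = (\<lambda>q. frechet_derivative f (at q) w)"
  have sG: "smooth_on U G" unfolding G_def by (rule smooth_deriv[OF f])
  have sH: "smooth_on U H" unfolding H_def by (rule smooth_deriv[OF f])
  have eG: "\<forall>q\<in>U. dv v f q = G q" unfolding G_def using smooth_diffble[OF f U] dv_fd by blast
  have eH: "\<forall>q\<in>U. dv w f q = H q" unfolding H_def using smooth_diffble[OF f U] dv_fd by blast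
  have "dv v (dv w f) p = dv v H p" by (rule dv_cong[OF U p eH])
  also have "\<dots> = frechet_derivative H (at p) v" by (rule dv_fd[OF smooth_diffble[OF sH U p]])
  also have "\<dots> = frechet_derivative G (at p) w"
  proof (rule young[OF U p, of f "\<lambda>q. frechet_derivative f (at q)", symmetric])
    show "(f has_derivative frechet_derivative f (at q)) (at q)" if "q \<in> U" for q
      using smooth_diffble[OF f U that] frechet_derivative_works by blast
    show "((\<lambda>q. frechet_derivative f (at q) w) has_derivative frechet_derivative H (at p)) (at p)"
      using smooth_diffble[OF sH U p] frechet_derivative_works unfolding H_def by blast
    show "((\<lambda>q. frechet_derivative f (at q) v) has_derivative frechet_derivative G (at p)) (at p)"
      using smooth_diffble[OF sG U p] frechet_derivative_works unfolding G_def by blast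
  qed
  also have "\<dots> = dv w G p" by (rule dv_fd[OF smooth_diffble[OF sG U p], symmetric])
  also have "\<dots> = dv w (dv v f) p" by (rule dv_cong[OF U p]) (use eG in simp)
  finally show ?thesis .
qed





definition eU :: pt where "eU = (1, 0, (0, 0))"
definition eR :: pt where "eR = (0, 1, (0, 0))"
definition eX :: "nat \<Rightarrow> pt" where "eX A = (0, 0, ebasis A)"
definition Om :: "(real \<times> real) set \<Rightarrow> pt set" where "Om X = {p. 0 < rc p \<and> xc p \<in> X}"

lemma xc_eU[simp]: "xc eU = 0" and xc_eR[simp]: "xc eR = 0" and rc_eU[simp]: "rc eU = 0"
  and rc_eR[simp]: "rc eR = 1" and rc_eX[simp]: "rc (eX A) = 0" and xc_eX[simp]: "xc (eX A) = ebasis A"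
  by (simp_all add: eU_def eR_def eX_def xc_def rc_def zero_prod_def)

lemma rc_add[simp]: "rc (p + q) = rc p + rc q" and xc_add[simp]: "xc (p + q) = xc p + xc q"
  and rc_scale[simp]: "rc (t *\<^sub>R p) = t * rc p" and xc_scale[simp]: "xc (t *\<^sub>R p) = t *\<^sub>R xc p"
  by (simp_all add: rc_def xc_def)

lemma bl_rc: "bounded_linear rc"
  unfolding rc_def by (intro bounded_linear_compose[OF bounded_linear_fst bounded_linear_snd])

lemma bl_xc: "bounded_linear xc"
  unfolding xc_def by (intro bounded_linear_compose[OF bounded_linear_snd bounded_linear_snd])

lemma du_eq: "du = dv eU"
proof (intro ext)
  fix f :: "pt \<Rightarrow> real" and p :: pt
  obtain a b x where p: "p = (a, b, x)" by (cases p) auto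
  have "du f p = deriv (\<lambda>t. f (t, b, x)) a" by (simp add: du_def p uc_def rc_def xc_def)
  also have "\<dots> = deriv ((\<lambda>t. f (t, b, x)) \<circ> (+) a) 0" by (rule deriv_shift_0)
  also have "\<dots> = dv eU f p" by (simp add: dv_def p eU_def o_def zero_prod_def[symmetric])
  finally show "du f p = dv eU f p" .
qed

lemma dr_eq: "dr = dv eR"
proof (intro ext)
  fix f :: "pt \<Rightarrow> real" and p :: pt
  obtain a b x where p: "p = (a, b, x)" by (cases p) auto
  have "dr f p = deriv (\<lambda>t. f (a, t, x)) b" by (simp add: dr_def p uc_def rc_def xc_def)
  also have "\<dots> = deriv ((\<lambda>t. f (a, t, x)) \<circ> (+) b) 0" by (rule deriv_shift_0)
  also have "\<dots> = dv eR f p" by (simp add: dv_def p eR_def o_def zero_prod_def[symmetric])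
  finally show "dr f p = dv eR f p" .
qed

lemma dx_eq: "dx A = dv (eX A)"
proof (intro ext)
  fix f :: "pt \<Rightarrow> real" and p :: pt
  obtain a b x where p: "p = (a, b, x)" by (cases p) auto
  show "dx A f p = dv (eX A) f p" by (simp add: dx_def dv_def p eX_def uc_def rc_def xc_def)
qed

lemma pdx_eq: "pdx A = dv (ebasis A)"
  by (intro ext) (simp add: pdx_def dv_def)

lemma open_Om: "open X \<Longrightarrow> open (Om X)"
proof -
  assume X: "open X"
  have "Om X = {p. 0 < rc p} \<inter> xc -` X" by (auto simp: Om_def)
  moreover have "open {p. 0 < rc p}"
    by (rule open_Collect_less) (auto intro: linear_continuous_on bl_rc)
  moreover have "open (xc -` X)"
    by (rule open_vimage[OF X]) (auto intro: linear_continuous_on bl_xc)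
  ultimately show ?thesis by auto
qed

lemma Om_rc: "p \<in> Om X \<Longrightarrow> 0 < rc p" and Om_xc: "p \<in> Om X \<Longrightarrow> xc p \<in> X"
  by (auto simp: Om_def)

lemma dv_zero[simp]: "dv 0 f p = 0"
  by (simp add: dv_def)

lemma dv_vconst: "(\<And>t. c (p + t *\<^sub>R v) = c p) \<Longrightarrow> dv v c p = 0"
  by (simp add: dv_def)

lemma sm_rc: "open U \<Longrightarrow> smooth_on U rc"
  by (rule sm_lin[OF _ bl_rc])

lemma dv_rc[simp]: "dv v rc p = rc v"
  by (rule dv_lin[OF bl_rc])

lemma sm_lift: "open X \<Longrightarrow> smooth_on X \<phi> \<Longrightarrow> smooth_on (Om X) (\<lambda>q. \<phi> (xc q))"
  by (rule sm_comp_lin[OF open_Om _ bl_xc]) (auto simp: Om_def)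

lemma dv_lift:
  assumes "open X" "smooth_on X \<phi>" "p \<in> Om X"
  shows "dv v (\<lambda>q. \<phi> (xc q)) p = dv (xc v) \<phi> (xc p)"
proof -
  have "(\<phi> has_derivative (\<lambda>h. dv h \<phi> (xc p))) (at (xc p))"
    by (rule sm_hasd[OF assms(1,2) Om_xc[OF assms(3)]])
  then have "((\<lambda>q. \<phi> (xc q)) has_derivative (\<lambda>h. dv (xc h) \<phi> (xc p))) (at p)"
    using diff_chain_at[OF bounded_linear_imp_has_derivative[OF bl_xc]] by (simp add: o_def)
  then show ?thesis by (rule dv_hasd)
qed

definition gsm :: "metric \<Rightarrow> (real \<times> real) set \<Rightarrow> bool" where
  "gsm g X \<longleftrightarrow> open X \<and> (\<forall>A B. smooth_on X (g A B)) \<and> (\<forall>x\<in>X. gdet g x \<noteq> 0)"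

lemma gsm_open: "gsm g X \<Longrightarrow> open X" by (simp add: gsm_def)

lemma sm_g: "gsm g X \<Longrightarrow> smooth_on X (g A B)" by (simp add: gsm_def)

lemma sm_gdet: "gsm g X \<Longrightarrow> smooth_on X (gdet g)"
proof -
  assume G: "gsm g X"
  have X: "open X" using G by (simp add: gsm_def)
  have "smooth_on X (\<lambda>x. g 0 0 x * g 1 1 x - g 0 1 x * g 1 0 x)"
    by (intro sm_diff sm_mult X sm_g[OF G])
  then show ?thesis by (simp add: gdet_def[abs_def])
qed

lemma sm_if: "smooth_on U f \<Longrightarrow> smooth_on U g \<Longrightarrow> smooth_on U (\<lambda>x. if P then f x else g x)"
  by (cases P) simp_all

lemma sm_ginv: "gsm g X \<Longrightarrow> smooth_on X (ginv g A B)"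
proof -
  assume G: "gsm g X"
  have X: "open X" using G by (simp add: gsm_def)
  have nz: "\<forall>x\<in>X. gdet g x \<noteq> 0" using G by (simp add: gsm_def)
  have d: "smooth_on X (\<lambda>x. f x / gdet g x)" if "smooth_on X f" for f
    by (rule sm_divide[OF X that sm_gdet[OF G] nz])
  have m: "smooth_on X (\<lambda>x. - f x)" if "smooth_on X f" for f by (rule sm_minus[OF X that])
  show ?thesis
    unfolding ginv_def[abs_def]
    by (intro sm_if d m sm_g[OF G] sm_const[OF X])
qed

lemma sm_pdx: "open X \<Longrightarrow> smooth_on X f \<Longrightarrow> smooth_on X (pdx A f)"
  unfolding pdx_eq by (rule sm_dv)

lemma sm_Gam: "gsm g X \<Longrightarrow> smooth_on X (Gam g C A B)"
proof -
  assume G: "gsm g X"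
  have X: "open X" using G by (simp add: gsm_def)
  have "smooth_on X (\<lambda>x. (1/2) * (\<Sum>D<2. ginv g C D x *
      (pdx A (g D B) x + pdx B (g D A) x - pdx D (g A B) x)))"
    by (intro sm_mult sm_const sm_sum sm_add sm_diff sm_pdx sm_g[OF G] sm_ginv[OF G] X finite_lessThan)
  then show ?thesis by (simp add: Gam_def[abs_def])
qed





lemma cov1_fun: "cov1 g A w B = (\<lambda>p. dv (eX A) (w B) p - (\<Sum>C<2. Gam g C A B (xc p) * w C p))"
  by (simp add: fun_eq_iff cov1_def dx_eq)

lemma cov2_fun: "cov2 g C T A B = (\<lambda>p. dv (eX C) (T A B) p
     - (\<Sum>D<2. Gam g D C A (xc p) * T D B p) - (\<Sum>D<2. Gam g D C B (xc p) * T A D p))"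
  by (simp add: fun_eq_iff cov2_def dx_eq)

lemma divT_fun: "divT g T A = (\<lambda>p. \<Sum>B<2. \<Sum>C<2. ginv g B C (xc p) * cov2 g C T A B p)"
  by (simp add: fun_eq_iff divT_def)

lemma TS_fun: "TS g X A B = (\<lambda>p. (1/2) * (X A B p + X B A p
     - (\<Sum>C<2. \<Sum>D<2. ginv g C D (xc p) * X C D p) * g A B (xc p)))"
  by (simp add: fun_eq_iff TS_def)

lemma iter_comm:
  assumes U: "open U" and PD: "\<And>F. P F \<Longrightarrow> P (D F)" and PS: "\<And>F. P F \<Longrightarrow> smooth_on U (\<Phi> F)"
    and C: "\<And>F q. P F \<Longrightarrow> q \<in> U \<Longrightarrow> dv v (\<Phi> F) q = \<Phi> (D F) q"
    and F: "P F"
  shows "q \<in> U \<Longrightarrow> (dv v ^^ i) (\<Phi> F) q = \<Phi> ((D ^^ i) F) q"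
proof (induction i arbitrary: q)
  case 0
  then show ?case by simp
next
  case (Suc i)
  have P: "P ((D ^^ i) F)" by (induction i) (simp_all add: F PD)
  have "(dv v ^^ Suc i) (\<Phi> F) q = dv v ((dv v ^^ i) (\<Phi> F)) q" by simp
  also have "\<dots> = dv v (\<Phi> ((D ^^ i) F)) q" by (rule dv_cong[OF U Suc.prems]) (use Suc.IH in simp)
  also have "\<dots> = \<Phi> (D ((D ^^ i) F)) q" by (rule C[OF P Suc.prems])
  finally show ?case by simp
qed

locale mctx =
  fixes g :: metric and X :: "(real \<times> real) set"
  assumes G: "gsm g X"
begin

abbreviation "OX \<equiv> Om X"

lemma oX: "open X" using G by (simp add: gsm_def)
lemma oO[simp]: "open OX" by (rule open_Om[OF oX])

lemma sL_ginv[simp]: "smooth_on OX (\<lambda>q. ginv g A B (xc q))" by (rule sm_lift[OF oX sm_ginv[OF G]])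
lemma sL_Gam[simp]: "smooth_on OX (\<lambda>q. Gam g C A B (xc q))" by (rule sm_lift[OF oX sm_Gam[OF G]])
lemma sL_g[simp]: "smooth_on OX (\<lambda>q. g A B (xc q))" by (rule sm_lift[OF oX sm_g[OF G]])

lemma dL_ginv[simp]: "p \<in> OX \<Longrightarrow> dv v (\<lambda>q. ginv g A B (xc q)) p = dv (xc v) (ginv g A B) (xc p)"
  by (rule dv_lift[OF oX sm_ginv[OF G]])
lemma dL_Gam[simp]: "p \<in> OX \<Longrightarrow> dv v (\<lambda>q. Gam g C A B (xc q)) p = dv (xc v) (Gam g C A B) (xc p)"
  by (rule dv_lift[OF oX sm_Gam[OF G]])
lemma dL_g[simp]: "p \<in> OX \<Longrightarrow> dv v (\<lambda>q. g A B (xc q)) p = dv (xc v) (g A B) (xc p)"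
  by (rule dv_lift[OF oX sm_g[OF G]])

lemmas sm_rules[simp] = sm_const[OF oO] sm_add[OF oO] sm_mult[OF oO] sm_diff[OF oO] sm_minus[OF oO]
  sm_power[OF oO] sm_sum[OF oO] sm_dv[OF oO] sm_rc[OF oO] sm_divide[OF oO]

lemmas dv_rules = dv_add[OF oO] dv_mult[OF oO] dv_diff[OF oO] dv_minus[OF oO] dv_power[OF oO]
  dv_sum[OF oO] dv_const dv_divide[OF oO]

lemma sm_cov1[simp]: "(\<And>C. smooth_on OX (w C)) \<Longrightarrow> smooth_on OX (cov1 g A w B)"
  unfolding cov1_fun by simp

lemma sm_cov2[simp]: "(\<And>A B. smooth_on OX (T A B)) \<Longrightarrow> smooth_on OX (cov2 g C T A B)"
  unfolding cov2_fun by simp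

lemma sm_divT[simp]: "(\<And>A B. smooth_on OX (T A B)) \<Longrightarrow> smooth_on OX (divT g T A)"
  unfolding divT_fun by simp

lemma sm_TS[simp]: "(\<And>A B. smooth_on OX (Y A B)) \<Longrightarrow> smooth_on OX (TS g Y A B)"
  unfolding TS_fun by simp

lemma sm_Pop[simp]: "(\<And>A B. smooth_on OX (T A B)) \<Longrightarrow> smooth_on OX (Pop g T A B)"
  unfolding Pop_def by simp

section \<open>Commutation with vertical derivatives\<close>

lemma C_cov1:
  assumes v: "xc v = 0" and w: "\<And>C. smooth_on OX (w C)" and p: "p \<in> OX"
  shows "dv v (cov1 g A w B) p = cov1 g A (\<lambda>B. dv v (w B)) B p"
  unfolding cov1_fun using w p v
  by (simp add: dv_rules dv_swap[OF oO w p, of v])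

lemma C_cov2:
  assumes v: "xc v = 0" and T: "\<And>A B. smooth_on OX (T A B)" and p: "p \<in> OX"
  shows "dv v (cov2 g C T A B) p = cov2 g C (\<lambda>A B. dv v (T A B)) A B p"
  unfolding cov2_fun using T p v
  by (simp add: dv_rules dv_swap[OF oO T p, of v])

lemma C_divT:
  assumes v: "xc v = 0" and T: "\<And>A B. smooth_on OX (T A B)" and p: "p \<in> OX"
  shows "dv v (divT g T A) p = divT g (\<lambda>A B. dv v (T A B)) A p"
  unfolding divT_fun using T p v
  by (simp add: dv_rules C_cov2[OF v T p, symmetric])

lemma C_TS:
  assumes v: "xc v = 0" and Y: "\<And>A B. smooth_on OX (Y A B)" and p: "p \<in> OX"
  shows "dv v (TS g Y A B) p = TS g (\<lambda>A B. dv v (Y A B)) A B p"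
  unfolding TS_fun using Y p v
  by (simp add: dv_rules algebra_simps)


lemma rcpos[simp]: "p \<in> OX \<Longrightarrow> 0 < rc p" by (rule Om_rc)
lemma rcnz[simp]: "p \<in> OX \<Longrightarrow> rc p \<noteq> 0" using rcpos[of p] by linarith

lemma cov1_cong_all:
  assumes eq: "\<And>C q. q \<in> OX \<Longrightarrow> w C q = w' C q" and p: "p \<in> OX"
  shows "cov1 g A w B p = cov1 g A w' B p"
proof -
  have "dv (eX A) (w B) p = dv (eX A) (w' B) p" by (rule dv_cong[OF oO p]) (use eq in blast)
  then show ?thesis unfolding cov1_fun using eq[OF p] by simp
qed

lemma cov1_cong:
  assumes eq: "\<And>C q. C < 2 \<Longrightarrow> q \<in> OX \<Longrightarrow> w C q = w' C q" and B: "B < 2" and p: "p \<in> OX"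
  shows "cov1 g A w B p = cov1 g A w' B p"
proof -
  have "dv (eX A) (w B) p = dv (eX A) (w' B) p" by (rule dv_cong[OF oO p]) (use eq B in blast)
  moreover have "(\<Sum>C<2. Gam g C A B (xc p) * w C p) = (\<Sum>C<2. Gam g C A B (xc p) * w' C p)"
    by (rule sum.cong) (auto simp: eq p)
  ultimately show ?thesis unfolding cov1_fun by simp
qed

lemma cov2_cong:
  assumes eq: "\<And>A B q. A < 2 \<Longrightarrow> B < 2 \<Longrightarrow> q \<in> OX \<Longrightarrow> T A B q = T' A B q"
    and A: "A < 2" and B: "B < 2" and p: "p \<in> OX"
  shows "cov2 g C T A B p = cov2 g C T' A B p"
proof -
  have "dv (eX C) (T A B) p = dv (eX C) (T' A B) p" by (rule dv_cong[OF oO p]) (use eq A B in blast)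
  moreover have "(\<Sum>D<2. Gam g D C A (xc p) * T D B p) = (\<Sum>D<2. Gam g D C A (xc p) * T' D B p)"
    by (rule sum.cong) (auto simp: eq p B)
  moreover have "(\<Sum>D<2. Gam g D C B (xc p) * T A D p) = (\<Sum>D<2. Gam g D C B (xc p) * T' A D p)"
    by (rule sum.cong) (auto simp: eq p A)
  ultimately show ?thesis unfolding cov2_fun by simp
qed

lemma divT_cong:
  assumes eq: "\<And>A B q. A < 2 \<Longrightarrow> B < 2 \<Longrightarrow> q \<in> OX \<Longrightarrow> T A B q = T' A B q"
    and A: "A < 2" and p: "p \<in> OX"
  shows "divT g T A p = divT g T' A p"
  unfolding divT_fun using cov2_cong[OF eq A _ p] by (intro sum.cong refl) auto

lemma TS_pt:
  assumes eq: "\<And>C D. C < 2 \<Longrightarrow> D < 2 \<Longrightarrow> Y C D p = Y' C D p" and A: "A < 2" and B: "B < 2"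
  shows "TS g Y A B p = TS g Y' A B p"
proof -
  have "(\<Sum>C<2. \<Sum>D<2. ginv g C D (xc p) * Y C D p) = (\<Sum>C<2. \<Sum>D<2. ginv g C D (xc p) * Y' C D p)"
    by (intro sum.cong refl) (auto simp: eq)
  then show ?thesis unfolding TS_def using eq A B by simp
qed

lemma TS_pt_all:
  assumes eq: "\<And>C D. Y C D p = Y' C D p"
  shows "TS g Y A B p = TS g Y' A B p"
  unfolding TS_def using eq by simp

lemma C_Pop:
  assumes v: "xc v = 0" and T: "\<And>A B. smooth_on OX (T A B)" and p: "p \<in> OX"
  shows "dv v (Pop g T A B) p = Pop g (\<lambda>A B. dv v (T A B)) A B p"
proof -
  have "dv v (Pop g T A B) p = TS g (\<lambda>A B. dv v (cov1 g A (divT g T) B)) A B p"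
    unfolding Pop_def by (rule C_TS[OF v _ p]) (simp add: T)
  also have "\<dots> = Pop g (\<lambda>A B. dv v (T A B)) A B p"
    unfolding Pop_def
  proof (rule TS_pt_all)
    fix C D
    have "dv v (cov1 g C (divT g T) D) p = cov1 g C (\<lambda>B. dv v (divT g T B)) D p"
      by (rule C_cov1[OF v _ p]) (simp add: T)
    also have "\<dots> = cov1 g C (divT g (\<lambda>A B. dv v (T A B))) D p"
      by (rule cov1_cong_all[OF _ p]) (rule C_divT[OF v T])
    finally show "dv v (cov1 g C (divT g T) D) p = cov1 g C (divT g (\<lambda>A B. dv v (T A B))) D p" .
  qed
  finally show ?thesis .
qed

section \<open>Multiplication by functions constant along S\<close>

lemma cov1_cmul:
  assumes w: "\<And>C. smooth_on OX (w C)" and c: "smooth_on OX c" and cx: "\<And>q t A. c (q + t *\<^sub>R eX A) = c q"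
    and p: "p \<in> OX"
  shows "cov1 g A (\<lambda>B q. c q * w B q) B p = c p * cov1 g A w B p"
proof -
  have hx: "dv (eX A) c p = 0" by (rule dv_vconst) (rule cx)
  show ?thesis unfolding cov1_fun using w c p hx
    by (simp add: dv_rules algebra_simps sum_distrib_left)
qed

lemma cov2_cmul:
  assumes T: "\<And>A B. smooth_on OX (T A B)" and c: "smooth_on OX c" and cx: "\<And>q t A. c (q + t *\<^sub>R eX A) = c q"
    and p: "p \<in> OX"
  shows "cov2 g C (\<lambda>A B q. c q * T A B q) A B p = c p * cov2 g C T A B p"
proof -
  have hx: "dv (eX C) c p = 0" by (rule dv_vconst) (rule cx)
  show ?thesis unfolding cov2_fun using T c p hx
    by (simp add: dv_rules algebra_simps sum_distrib_left)
qed

lemma divT_cmul: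
  assumes T: "\<And>A B. smooth_on OX (T A B)" and c: "smooth_on OX c" and cx: "\<And>q t A. c (q + t *\<^sub>R eX A) = c q"
    and p: "p \<in> OX"
  shows "divT g (\<lambda>A B q. c q * T A B q) A p = c p * divT g T A p"
  unfolding divT_fun using cov2_cmul[OF T c cx p]
  by (simp add: algebra_simps sum_distrib_left)

lemma TS_cmul: "TS g (\<lambda>A B q. c q * Y A B q) A B p = c p * TS g Y A B p"
  unfolding TS_def by (simp add: algebra_simps sum_distrib_left)

end





lemma alg:
  fixes r eps a2 m k0 k1 h0 h1 h2 t0 t1 t2 P1 :: real
  assumes r: "r \<noteq> 0"
  and e2: "k0 + r * k1 - (1/2) * ((eps - 3 * a2 * r^2) * h1 + (eps * r - a2 * r^3 - 2*m) * h2)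
     - ((m / r^2 - a2 * r) * h0 + (eps * r - a2 * r^3 - 2*m) / (2 * r) * h1) - (t0 + r * t1)
     + (m / r^2 - a2 * r) * h0 - t0 = 0"
  and cc: "4 * r^3 * t1 + r^4 * t2 = r^2 * P1"
  shows "2 * k0 + 2 * r * k1 - ((eps - 3 * a2 * r^2) * h1 + (eps * r - a2 * r^3 - 2*m) * h2)
     - ((-2 / r^3) * (4 * r^3 * t0 + r^4 * t1) + (1 / r^2) * (12 * r^2 * t0 + 8 * r^3 * t1 + r^4 * t2))
     + P1 - eps * h1 = ((eps * r - a2 * r^3 - 2*m) / r - eps) * h1"
proof -
  have k0: "k0 = - (r * k1) + (1/2) * ((eps - 3 * a2 * r^2) * h1 + (eps * r - a2 * r^3 - 2*m) * h2)
     + ((m / r^2 - a2 * r) * h0 + (eps * r - a2 * r^3 - 2*m) / (2 * r) * h1) + (t0 + r * t1)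
     - (m / r^2 - a2 * r) * h0 + t0" using e2 by linarith
  have P1: "P1 = (4 * r^3 * t1 + r^4 * t2) / r^2" using r by (simp add: cc)
  show ?thesis unfolding k0 P1 using r by (simp add: field_simps) algebra
qed

lemma alg2:
  fixes r eps a2 m d w1 w2 :: real
  assumes r: "r \<noteq> 0" and e: "r^2 * d = 4 * r^3 * w1 + r^4 * w2"
  shows "((eps * r - a2 * r^3 - 2*m) / r - eps) * d + a2 * (4 * r^3 * w1 + r^4 * w2)
     + 2 * m * (3 * w1 + (w1 + r * w2)) = 0"
proof -
  have d: "d = (4 * r^3 * w1 + r^4 * w2) / r^2" using r by (simp add: e[symmetric])
  show ?thesis unfolding d using r by (simp add: field_simps) algebra
qed

context mctx begin

lemma C_TScov1:
  assumes v: "xc v = 0" and W: "\<And>C. smooth_on OX (W C)" and p: "p \<in> OX"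
  shows "dv v (TS g (\<lambda>A B. cov1 g A W B) A B) p = TS g (\<lambda>A B. cov1 g A (\<lambda>B. dv v (W B)) B) A B p"
proof -
  have "dv v (TS g (\<lambda>A B. cov1 g A W B) A B) p = TS g (\<lambda>A B. dv v (cov1 g A W B)) A B p"
    by (rule C_TS[OF v _ p]) (simp add: W)
  also have "\<dots> = TS g (\<lambda>A B. cov1 g A (\<lambda>B. dv v (W B)) B) A B p"
    by (rule TS_pt_all) (rule C_cov1[OF v W p])
  finally show ?thesis .
qed

lemma cov2_cong_all:
  assumes eq: "\<And>A B q. q \<in> OX \<Longrightarrow> T A B q = T' A B q" and p: "p \<in> OX"
  shows "cov2 g C T A B p = cov2 g C T' A B p"
proof -
  have "dv (eX C) (T A B) p = dv (eX C) (T' A B) p" by (rule dv_cong[OF oO p]) (use eq in blast)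
  then show ?thesis unfolding cov2_fun using eq[OF p] by simp
qed

lemma divT_cong_all:
  assumes eq: "\<And>A B q. q \<in> OX \<Longrightarrow> T A B q = T' A B q" and p: "p \<in> OX"
  shows "divT g T A p = divT g T' A p"
  unfolding divT_fun using cov2_cong_all[OF eq p] by simp

lemma sm_iter: "smooth_on OX f \<Longrightarrow> smooth_on OX ((dv v ^^ n) f)"
  by (induction n) simp_all

end

theorem lemma3p1:
  fixes g :: metric and X :: "(real \<times> real) set"
    and eps m :: real and alpha :: complex
    and hu :: "nat \<Rightarrow> pt \<Rightarrow> real" and h :: "nat \<Rightarrow> nat \<Rightarrow> pt \<Rightarrow> real"
    and i :: nat
  defines "\<Omega> \<equiv> {p :: pt. 0 < rc p \<and> xc p \<in> X}"
  defines "a2 \<equiv> Re (alpha ^ 2)"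
  defines "V \<equiv> Vfun eps a2 m"
  defines "hcu \<equiv> (\<lambda>A p. hu A p / (rc p) ^ 2)"
  defines "hch \<equiv> (\<lambda>A B p. h A B p / (rc p) ^ 2)"
  assumes X_open: "open X"
    and g_smooth: "\<And>A B. smooth_on X (g A B)"
    and g_sym: "\<And>A B x. x \<in> X \<Longrightarrow> g A B x = g B A x"
    and g_pos: "\<And>x. x \<in> X \<Longrightarrow> g 0 0 x > 0 \<and> gdet g x > 0"
    and eps_vals: "eps \<in> {-1, 0, 1}"
    and g_curv: "\<And>x. x \<in> X \<Longrightarrow> gauss_curv g x = eps"
    and alpha_vals: "alpha \<in> \<real> \<or> Re alpha = 0"
    and hu_smooth: "\<And>A. smooth_on \<Omega> (hu A)"
    and h_smooth: "\<And>A B. smooth_on \<Omega> (h A B)"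
    and h_sym: "\<And>A B p. p \<in> \<Omega> \<Longrightarrow> h A B p = h B A p"
    and h_traceless: "\<And>p. p \<in> \<Omega> \<Longrightarrow> (\<Sum>A<2. \<Sum>B<2. ginv g A B (xc p) * h A B p) = 0"
    and eq1: "\<And>A p. A < 2 \<Longrightarrow> p \<in> \<Omega> \<Longrightarrow>
       (du ^^ i) (dr (\<lambda>q. rc q ^ 4 * dr (hcu A) q)) p
       = (du ^^ i) (divT g (\<lambda>A B q. rc q ^ 2 * dr (hch A B) q) A) p"
    and eq2: "\<And>A B p. A < 2 \<Longrightarrow> B < 2 \<Longrightarrow> p \<in> \<Omega> \<Longrightarrow>
       (du ^^ i) (\<lambda>p.
          dr (\<lambda>q. rc q * du (hch A B) q - (1/2) * V (rc q) * dr (hch A B) q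
                   - V (rc q) / (2 * rc q) * hch A B q
                   - rc q * TS g (\<lambda>A B. cov1 g A hcu B) A B q) p
          + (m / (rc p) ^ 2 - a2 * rc p) * hch A B p
          - TS g (\<lambda>A B. cov1 g A hcu B) A B p) p = 0"
  defines "Hi \<equiv> (\<lambda>A B. (du ^^ i) (hch A B))"
    and "Hi1 \<equiv> (\<lambda>A B. (du ^^ Suc i) (hch A B))"
    and "Hui \<equiv> (\<lambda>A. (du ^^ i) (hcu A))"
  defines "Q \<equiv> (\<lambda>A p.
       divT g (\<lambda>A B q. 2 * rc q * Hi1 A B q - V (rc q) * dr (Hi A B) q
           - 1 / (rc q) ^ 2 * dr (\<lambda>q'. rc q' ^ 4 * TS g (\<lambda>A B. cov1 g A Hui B) A B q') q
           + Pop g Hi A B q - eps * Hi A B q) A p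
       + a2 * rc p ^ 4 * dr (Hui A) p
       + 2 * m * (3 * Hui A p + rc p * dr (Hui A) p))"
  shows "\<forall>A<2. \<forall>p\<in>\<Omega>. dr (Q A) p = 0"
proof -
  have gs: "gsm g X" unfolding gsm_def
  proof (intro conjI allI ballI X_open g_smooth)
    fix x assume "x \<in> X" then show "gdet g x \<noteq> 0" using g_pos[of x] by linarith
  qed
  interpret M: mctx g X by (rule mctx.intro[OF gs])
  have OmE: "\<Omega> = Om X" unfolding \<Omega>_def Om_def by (rule refl)
  have shu: "\<And>A. smooth_on (Om X) (hu A)" using hu_smooth OmE by simp
  have sh: "\<And>A B. smooth_on (Om X) (h A B)" using h_smooth OmE by simp
  have shcu: "\<And>A. smooth_on (Om X) (hcu A)" unfolding hcu_def using shu by simp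
  have shch: "\<And>A B. smooth_on (Om X) (hch A B)" unfolding hch_def using sh by simp
  have sHi: "\<And>A B. smooth_on (Om X) (Hi A B)" unfolding Hi_def du_eq using shch by (simp add: M.sm_iter)
  have sHi1: "\<And>A B. smooth_on (Om X) (Hi1 A B)" unfolding Hi1_def du_eq using shch by (simp add: M.sm_iter)
  have sHui: "\<And>A. smooth_on (Om X) (Hui A)" unfolding Hui_def du_eq using shcu by (simp add: M.sm_iter)
  have Hi1E: "Hi1 A B = dv eU (Hi A B)" for A B unfolding Hi1_def Hi_def du_eq by simp
  have Om2: "Om X = \<Omega>" using OmE by simp
  define D :: "(nat \<Rightarrow> nat \<Rightarrow> pt \<Rightarrow> real) \<times> (nat \<Rightarrow> pt \<Rightarrow> real) \<Rightarrow> (nat \<Rightarrow> nat \<Rightarrow> pt \<Rightarrow> real) \<times> (nat \<Rightarrow> pt \<Rightarrow> real)"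
    where "D = (\<lambda>(H, W). ((\<lambda>A B. dv eU (H A B)), (\<lambda>A. dv eU (W A))))"
  define P :: "(nat \<Rightarrow> nat \<Rightarrow> pt \<Rightarrow> real) \<times> (nat \<Rightarrow> pt \<Rightarrow> real) \<Rightarrow> bool"
    where "P = (\<lambda>(H, W). (\<forall>A B. smooth_on (Om X) (H A B)) \<and> (\<forall>A. smooth_on (Om X) (W A)))"
  have PD: "\<And>F. P F \<Longrightarrow> P (D F)" unfolding P_def D_def by auto
  have Diter: "(D ^^ n) (hch, hcu) = ((\<lambda>A B. (dv eU ^^ n) (hch A B)), (\<lambda>A. (dv eU ^^ n) (hcu A)))" for n
    by (induction n) (simp_all add: D_def)
  have P0: "P (hch, hcu)" unfolding P_def using shch shcu by simp
  have DiE: "(D ^^ i) (hch, hcu) = (Hi, Hui)" unfolding Diter Hi_def Hui_def du_eq by simp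
  have E1: "dv eR (\<lambda>q. rc q ^ 4 * dv eR (Hui A) q) p = divT g (\<lambda>A B q. rc q ^ 2 * dv eR (Hi A B) q) A p"
    if A: "A < 2" and p: "p \<in> Om X" for A p
  proof -
    define \<Phi>a where "\<Phi>a = (\<lambda>(H::nat \<Rightarrow> nat \<Rightarrow> pt \<Rightarrow> real, W::nat \<Rightarrow> pt \<Rightarrow> real). dv eR (\<lambda>q. rc q ^ 4 * dv eR (W A) q))"
    define \<Phi>b where "\<Phi>b = (\<lambda>(H::nat \<Rightarrow> nat \<Rightarrow> pt \<Rightarrow> real, W::nat \<Rightarrow> pt \<Rightarrow> real). divT g (\<lambda>A B q. rc q ^ 2 * dv eR (H A B) q) A)"
    have ia: "(dv eU ^^ i) (\<Phi>a (hch, hcu)) p = \<Phi>a ((D ^^ i) (hch, hcu)) p"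
    proof (rule iter_comm[where P=P and D=D and v=eU, OF M.oO PD _ _ P0 p])
      show "smooth_on (Om X) (\<Phi>a F)" if "P F" for F using that unfolding P_def \<Phi>a_def by (cases F) simp
      show "dv eU (\<Phi>a F) q = \<Phi>a (D F) q" if F: "P F" and q: "q \<in> Om X" for F q
      proof -
        obtain H W where HW: "F = (H, W)" by (cases F)
        have sW: "\<And>A. smooth_on (Om X) (W A)" using F HW unfolding P_def by simp
        have "dv eU (dv eR (\<lambda>q. rc q ^ 4 * dv eR (W A) q)) q = dv eR (dv eU (\<lambda>q. rc q ^ 4 * dv eR (W A) q)) q"
          by (rule dv_swap[OF M.oO _ q]) (simp add: sW)
        also have "\<dots> = dv eR (\<lambda>q. rc q ^ 4 * dv eR (dv eU (W A)) q) q"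
          by (rule dv_cong[OF M.oO q]) (simp add: M.dv_rules sW dv_swap[OF M.oO sW, where v=eU and w=eR])
        finally show ?thesis unfolding \<Phi>a_def D_def HW by simp
      qed
    qed
    have ib: "(dv eU ^^ i) (\<Phi>b (hch, hcu)) p = \<Phi>b ((D ^^ i) (hch, hcu)) p"
    proof (rule iter_comm[where P=P and D=D and v=eU, OF M.oO PD _ _ P0 p])
      show "smooth_on (Om X) (\<Phi>b F)" if "P F" for F using that unfolding P_def \<Phi>b_def by (cases F) simp
      show "dv eU (\<Phi>b F) q = \<Phi>b (D F) q" if F: "P F" and q: "q \<in> Om X" for F q
      proof -
        obtain H W where HW: "F = (H, W)" by (cases F)
        have sH: "\<And>A B. smooth_on (Om X) (H A B)" using F HW unfolding P_def by simp
        have "dv eU (divT g (\<lambda>A B q. rc q ^ 2 * dv eR (H A B) q) A) q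
            = divT g (\<lambda>A B. dv eU (\<lambda>q. rc q ^ 2 * dv eR (H A B) q)) A q"
          by (rule M.C_divT[OF xc_eU _ q]) (simp add: sH)
        also have "\<dots> = divT g (\<lambda>A B q. rc q ^ 2 * dv eR (dv eU (H A B)) q) A q"
          by (rule M.divT_cong_all[OF _ q]) (simp add: M.dv_rules sH dv_swap[OF M.oO sH, where v=eU and w=eR])
        finally show ?thesis unfolding \<Phi>b_def D_def HW by simp
      qed
    qed
    have "(dv eU ^^ i) (\<Phi>a (hch, hcu)) p = (dv eU ^^ i) (\<Phi>b (hch, hcu)) p"
      using eq1[OF A, of p] p OmE unfolding \<Phi>a_def \<Phi>b_def du_eq dr_eq by simp
    then show ?thesis using ia ib unfolding DiE \<Phi>a_def \<Phi>b_def by simp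
  qed
  have E2: "dv eR (\<lambda>q. rc q * Hi1 A B q - (1/2) * V (rc q) * dv eR (Hi A B) q
                   - V (rc q) / (2 * rc q) * Hi A B q
                   - rc q * TS g (\<lambda>A B. cov1 g A Hui B) A B q) p
          + (m / (rc p) ^ 2 - a2 * rc p) * Hi A B p
          - TS g (\<lambda>A B. cov1 g A Hui B) A B p = 0"
    if A: "A < 2" and B: "B < 2" and p: "p \<in> Om X" for A B p
  proof -
    define \<Phi>2 where "\<Phi>2 = (\<lambda>(H::nat \<Rightarrow> nat \<Rightarrow> pt \<Rightarrow> real, W::nat \<Rightarrow> pt \<Rightarrow> real). \<lambda>p.
          dv eR (\<lambda>q. rc q * dv eU (H A B) q - (1/2) * V (rc q) * dv eR (H A B) q
                   - V (rc q) / (2 * rc q) * H A B q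
                   - rc q * TS g (\<lambda>A B. cov1 g A W B) A B q) p
          + (m / (rc p) ^ 2 - a2 * rc p) * H A B p
          - TS g (\<lambda>A B. cov1 g A W B) A B p)"
    have i2: "(dv eU ^^ i) (\<Phi>2 (hch, hcu)) p = \<Phi>2 ((D ^^ i) (hch, hcu)) p"
    proof (rule iter_comm[where P=P and D=D and v=eU, OF M.oO PD _ _ P0 p])
      show "smooth_on (Om X) (\<Phi>2 F)" if "P F" for F using that unfolding P_def \<Phi>2_def V_def Vfun_def by (cases F) simp
      show "dv eU (\<Phi>2 F) q = \<Phi>2 (D F) q" if F: "P F" and q: "q \<in> Om X" for F q
      proof -
        obtain H W where HW: "F = (H, W)" by (cases F)
        have sW: "\<And>A. smooth_on (Om X) (W A)" using F HW unfolding P_def by simp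
        have sH: "\<And>A B. smooth_on (Om X) (H A B)" using F HW unfolding P_def by simp
        define T0 where "T0 = TS g (\<lambda>A B. cov1 g A W B) A B"
        define T1 where "T1 = TS g (\<lambda>A B. cov1 g A (\<lambda>B. dv eU (W B)) B) A B"
        have sT0: "smooth_on (Om X) T0" unfolding T0_def by (simp add: sW)
        have dT0: "dv eU T0 y = T1 y" if "y \<in> Om X" for y
          unfolding T0_def T1_def by (rule M.C_TScov1[OF xc_eU sW that])
        define G where "G = (\<lambda>q. rc q * dv eU (H A B) q - (1/2) * V (rc q) * dv eR (H A B) q
                   - V (rc q) / (2 * rc q) * H A B q - rc q * T0 q)"
        define G' where "G' = (\<lambda>q. rc q * dv eU (dv eU (H A B)) q - (1/2) * V (rc q) * dv eR (dv eU (H A B)) q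
                   - V (rc q) / (2 * rc q) * dv eU (H A B) q - rc q * T1 q)"
        have sG: "smooth_on (Om X) G" unfolding G_def V_def Vfun_def by (simp add: sH sT0)
        have PF: "\<Phi>2 F = (\<lambda>p. dv eR G p + (m / (rc p) ^ 2 - a2 * rc p) * H A B p - T0 p)"
          unfolding \<Phi>2_def HW G_def T0_def by simp
        have PDF: "\<Phi>2 (D F) = (\<lambda>p. dv eR G' p + (m / (rc p) ^ 2 - a2 * rc p) * dv eU (H A B) p - T1 p)"
          unfolding \<Phi>2_def HW G'_def T1_def D_def by simp
        have s1: "dv eU (\<Phi>2 F) q = dv eU (dv eR G) q + (m / (rc q) ^ 2 - a2 * rc q) * dv eU (H A B) q - T1 q"
          unfolding PF using q sG sH sT0 by (simp add: M.dv_rules dT0)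
        have s2: "dv eU (dv eR G) q = dv eR (dv eU G) q" by (rule dv_swap[OF M.oO sG q])
        have s3: "dv eR (dv eU G) q = dv eR G' q"
        proof (rule dv_cong[OF M.oO q], intro ballI)
          fix y assume y: "y \<in> Om X"
          show "dv eU G y = G' y"
            unfolding G_def G'_def V_def Vfun_def using y sH sT0
            by (simp add: M.dv_rules dT0 dv_swap[OF M.oO sH, where v=eU and w=eR])
        qed
        show ?thesis unfolding PDF using s1 s2 s3 by simp
      qed
    qed
    have "(dv eU ^^ i) (\<Phi>2 (hch, hcu)) p = 0"
      using eq2[OF A B, of p] p OmE unfolding \<Phi>2_def du_eq dr_eq by simp
    then show ?thesis using i2 unfolding DiE \<Phi>2_def Hi1E by simp
  qed
  define T where "T = (\<lambda>A B. TS g (\<lambda>A B. cov1 g A Hui B) A B)"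
  define RH where "RH = (\<lambda>A B. dv eR (Hi A B))"
  have sT: "\<And>A B. smooth_on (Om X) (T A B)" unfolding T_def by (simp add: sHui)
  have sRH: "\<And>A B. smooth_on (Om X) (RH A B)" unfolding RH_def by (simp add: sHi)
  have cx4: "\<And>q t A. rc (q + t *\<^sub>R eX A) ^ 4 = rc q ^ 4" by simp
  have cx2: "\<And>q t A. rc (q + t *\<^sub>R eX A) ^ 2 = rc q ^ 2" by simp
  have Cc: "dv eR (\<lambda>q. rc q ^ 4 * dv eR (T A B) q) q = rc q ^ 2 * Pop g RH A B q"
    if A: "A < 2" and B: "B < 2" and q: "q \<in> Om X" for A B q
  proof -
    define W4 where "W4 = (\<lambda>B q. rc q ^ 4 * dv eR (Hui B) q)"
    have sW4: "\<And>B. smooth_on (Om X) (W4 B)" unfolding W4_def by (simp add: sHui)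
    have a: "rc y ^ 4 * dv eR (T A B) y = TS g (\<lambda>A B. cov1 g A W4 B) A B y" if y: "y \<in> Om X" for y
    proof -
      have "rc y ^ 4 * dv eR (T A B) y = rc y ^ 4 * TS g (\<lambda>A B. cov1 g A (\<lambda>B. dv eR (Hui B)) B) A B y"
        unfolding T_def by (simp add: M.C_TScov1[OF xc_eR sHui y])
      also have "\<dots> = TS g (\<lambda>A B q. rc q ^ 4 * cov1 g A (\<lambda>B. dv eR (Hui B)) B q) A B y"
        by (rule M.TS_cmul[symmetric])
      also have "\<dots> = TS g (\<lambda>A B. cov1 g A W4 B) A B y"
        unfolding W4_def
        by (rule M.TS_pt_all) (rule M.cov1_cmul[OF _ _ cx4 y, symmetric]; simp add: sHui)
      finally show ?thesis .
    qed
    have "dv eR (\<lambda>q. rc q ^ 4 * dv eR (T A B) q) q = dv eR (TS g (\<lambda>A B. cov1 g A W4 B) A B) q"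
      by (rule dv_cong[OF M.oO q]) (simp add: a)
    also have "\<dots> = TS g (\<lambda>A B. cov1 g A (\<lambda>B. dv eR (W4 B)) B) A B q"
      by (rule M.C_TScov1[OF xc_eR sW4 q])
    also have "\<dots> = TS g (\<lambda>A B. cov1 g A (\<lambda>B. divT g (\<lambda>A B q. rc q ^ 2 * RH A B q) B) B) A B q"
    proof (rule M.TS_pt[OF _ A B])
      fix C D :: nat assume C: "C < 2" and D: "D < 2"
      show "cov1 g C (\<lambda>B. dv eR (W4 B)) D q = cov1 g C (\<lambda>B. divT g (\<lambda>A B q. rc q ^ 2 * RH A B q) B) D q"
        by (rule M.cov1_cong[OF _ D q]) (simp add: W4_def RH_def E1)
    qed
    also have "\<dots> = TS g (\<lambda>A B. cov1 g A (\<lambda>B q. rc q ^ 2 * divT g RH B q) B) A B q"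
      by (rule M.TS_pt_all, rule M.cov1_cong_all[OF _ q], rule M.divT_cmul[OF sRH _ cx2]) simp_all
    also have "\<dots> = TS g (\<lambda>A B q. rc q ^ 2 * cov1 g A (divT g RH) B q) A B q"
      by (rule M.TS_pt_all, rule M.cov1_cmul[OF _ _ cx2 q]) (simp_all add: sRH)
    also have "\<dots> = rc q ^ 2 * Pop g RH A B q"
      unfolding Pop_def by (rule M.TS_cmul)
    finally show ?thesis .
  qed
  define Inner where "Inner = (\<lambda>A B q. 2 * rc q * Hi1 A B q - V (rc q) * dv eR (Hi A B) q
           - 1 / (rc q) ^ 2 * dv eR (\<lambda>q'. rc q' ^ 4 * TS g (\<lambda>A B. cov1 g A Hui B) A B q') q
           + Pop g Hi A B q - eps * Hi A B q)"
  have key: "dv eR (Inner A B) q = (V (rc q) / rc q - eps) * RH A B q"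
    if A: "A < 2" and B: "B < 2" and q: "q \<in> Om X" for A B q
  proof -
    have r: "rc q \<noteq> 0" using q by simp
    have IE: "Inner A B = (\<lambda>q. 2 * rc q * Hi1 A B q - V (rc q) * dv eR (Hi A B) q
           - 1 / (rc q) ^ 2 * dv eR (\<lambda>q'. rc q' ^ 4 * T A B q') q + Pop g Hi A B q - eps * Hi A B q)"
      unfolding Inner_def T_def by simp
    have FY: "dv eR (\<lambda>q'. rc q' ^ 4 * T A B q') y = 4 * rc y ^ 3 * T A B y + rc y ^ 4 * dv eR (T A B) y"
      if y: "y \<in> Om X" for y
      using y sT by (simp add: M.dv_rules)
    have FYY: "dv eR (dv eR (\<lambda>q'. rc q' ^ 4 * T A B q')) q
        = 12 * rc q ^ 2 * T A B q + 8 * rc q ^ 3 * dv eR (T A B) q + rc q ^ 4 * dv eR (dv eR (T A B)) q"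
    proof -
      have "dv eR (dv eR (\<lambda>q'. rc q' ^ 4 * T A B q')) q
          = dv eR (\<lambda>y. 4 * rc y ^ 3 * T A B y + rc y ^ 4 * dv eR (T A B) y) q"
        by (rule dv_cong[OF M.oO q]) (simp add: FY)
      also have "\<dots> = 12 * rc q ^ 2 * T A B q + 8 * rc q ^ 3 * dv eR (T A B) q + rc q ^ 4 * dv eR (dv eR (T A B)) q"
        using q sT by (simp add: M.dv_rules algebra_simps)
      finally show ?thesis .
    qed
    have FI: "dv eR (Inner A B) q = 2 * Hi1 A B q + 2 * rc q * dv eR (Hi1 A B) q
        - ((eps - 3 * a2 * rc q ^ 2) * RH A B q + (eps * rc q - a2 * rc q ^ 3 - 2 * m) * dv eR (RH A B) q)
        - ((-2 / rc q ^ 3) * (4 * rc q ^ 3 * T A B q + rc q ^ 4 * dv eR (T A B) q)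
           + (1 / rc q ^ 2) * (12 * rc q ^ 2 * T A B q + 8 * rc q ^ 3 * dv eR (T A B) q + rc q ^ 4 * dv eR (dv eR (T A B)) q))
        + Pop g RH A B q - eps * RH A B q"
      unfolding IE
      by (simp add: q sHi sHi1 sT M.dv_rules FY[OF q] FYY M.C_Pop[OF xc_eR sHi q] V_def Vfun_def RH_def)
        (simp add: field_simps r; algebra)
    have E2T: "dv eR (\<lambda>q. rc q * Hi1 A B q - (1/2) * V (rc q) * dv eR (Hi A B) q
                   - V (rc q) / (2 * rc q) * Hi A B q - rc q * T A B q) q
          + (m / (rc q) ^ 2 - a2 * rc q) * Hi A B q - T A B q = 0"
      using E2[OF A B q] unfolding T_def by simp
    have G2: "dv eR (\<lambda>q. rc q * Hi1 A B q - (1/2) * V (rc q) * dv eR (Hi A B) q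
                   - V (rc q) / (2 * rc q) * Hi A B q - rc q * T A B q) q
      = Hi1 A B q + rc q * dv eR (Hi1 A B) q
        - (1/2) * ((eps - 3 * a2 * rc q ^ 2) * RH A B q + (eps * rc q - a2 * rc q ^ 3 - 2*m) * dv eR (RH A B) q)
        - ((m / rc q ^ 2 - a2 * rc q) * Hi A B q + (eps * rc q - a2 * rc q ^ 3 - 2*m) / (2 * rc q) * RH A B q)
        - (T A B q + rc q * dv eR (T A B) q)"
      by (simp add: q sHi sHi1 sT M.dv_rules V_def Vfun_def RH_def) (simp add: field_simps r; algebra)
    have e2: "Hi1 A B q + rc q * dv eR (Hi1 A B) q
        - (1/2) * ((eps - 3 * a2 * rc q ^ 2) * RH A B q + (eps * rc q - a2 * rc q ^ 3 - 2*m) * dv eR (RH A B) q)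
        - ((m / rc q ^ 2 - a2 * rc q) * Hi A B q + (eps * rc q - a2 * rc q ^ 3 - 2*m) / (2 * rc q) * RH A B q)
        - (T A B q + rc q * dv eR (T A B) q) + (m / rc q ^ 2 - a2 * rc q) * Hi A B q - T A B q = 0"
      using E2T unfolding G2 .
    have CcL: "dv eR (\<lambda>q. rc q ^ 4 * dv eR (T A B) q) q
        = 4 * rc q ^ 3 * dv eR (T A B) q + rc q ^ 4 * dv eR (dv eR (T A B)) q"
      by (simp add: q sT M.dv_rules)
    have cc: "4 * rc q ^ 3 * dv eR (T A B) q + rc q ^ 4 * dv eR (dv eR (T A B)) q = rc q ^ 2 * Pop g RH A B q"
      using Cc[OF A B q] unfolding CcL .
    have "dv eR (Inner A B) q = ((eps * rc q - a2 * rc q ^ 3 - 2*m) / rc q - eps) * RH A B q"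
      unfolding FI by (rule alg[OF r e2 cc])
    then show ?thesis by (simp add: V_def Vfun_def)
  qed
  have sInner: "\<And>A B. smooth_on (Om X) (Inner A B)"
    unfolding Inner_def V_def Vfun_def by (simp add: sHi sHi1 sHui)
  have dQ: "dv eR (Q A) p = 0" if A: "A < 2" and p: "p \<in> Om X" for A p
  proof -
    have r: "rc p \<noteq> 0" using p by simp
    have QE: "Q A = (\<lambda>p. divT g Inner A p + a2 * rc p ^ 4 * dv eR (Hui A) p
       + 2 * m * (3 * Hui A p + rc p * dv eR (Hui A) p))"
      unfolding Q_def Inner_def dr_eq by simp
    have s1: "dv eR (Q A) p = dv eR (divT g Inner A) p
        + a2 * (4 * rc p ^ 3 * dv eR (Hui A) p + rc p ^ 4 * dv eR (dv eR (Hui A)) p)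
        + 2 * m * (3 * dv eR (Hui A) p + (dv eR (Hui A) p + rc p * dv eR (dv eR (Hui A)) p))"
      unfolding QE by (simp add: p sInner sHui M.dv_rules algebra_simps)
    have cV: "smooth_on (Om X) (\<lambda>q. V (rc q) / rc q - eps)"
      unfolding V_def Vfun_def by simp
    have cVx: "\<And>q t A. V (rc (q + t *\<^sub>R eX A)) / rc (q + t *\<^sub>R eX A) - eps = V (rc q) / rc q - eps" by simp
    have s2: "dv eR (divT g Inner A) p = (V (rc p) / rc p - eps) * divT g RH A p"
    proof -
      have "dv eR (divT g Inner A) p = divT g (\<lambda>A B. dv eR (Inner A B)) A p"
        by (rule M.C_divT[OF xc_eR sInner p])
      also have "\<dots> = divT g (\<lambda>A B q. (V (rc q) / rc q - eps) * RH A B q) A p"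
        by (rule M.divT_cong[OF _ A p]) (simp add: key)
      also have "\<dots> = (V (rc p) / rc p - eps) * divT g RH A p"
        by (rule M.divT_cmul[OF sRH cV cVx p])
      finally show ?thesis .
    qed
    have s3: "rc p ^ 2 * divT g RH A p = 4 * rc p ^ 3 * dv eR (Hui A) p + rc p ^ 4 * dv eR (dv eR (Hui A)) p"
    proof -
      have "4 * rc p ^ 3 * dv eR (Hui A) p + rc p ^ 4 * dv eR (dv eR (Hui A)) p
          = dv eR (\<lambda>q. rc q ^ 4 * dv eR (Hui A) q) p"
        by (simp add: p sHui M.dv_rules)
      also have "\<dots> = divT g (\<lambda>A B q. rc q ^ 2 * RH A B q) A p" unfolding RH_def by (rule E1[OF A p])
      also have "\<dots> = rc p ^ 2 * divT g RH A p" by (rule M.divT_cmul[OF sRH _ cx2 p]) simp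
      finally show ?thesis by simp
    qed
    show ?thesis unfolding s1 s2 V_def Vfun_def by (rule alg2[OF r s3])
  qed
  show ?thesis unfolding dr_eq using dQ OmE by simp
qed


end
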